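(* For every pair of integers $r\ge 3$ and $t\ge 2$, with $s=\lfloor (t-1)/2\rfloor$, there exists a binary $(n,k,r,t)_{\mathrm{seq}}$ code whose rate satisfies $$\frac{k}{n}=\frac{r^{s+1}}{r^{s+1}+2\sum_{i=0}^{s}r^i}\ \text{ if $t$ is even},\qquad \frac{k}{n}=\frac{r^{s+1}}{r^{s+1}+2\sum_{i=1}^{s}r^i+1}\ \text{ if $t$ is odd}.$$
   Context: A binary code is a linear code over $\mathbb{F}_2$. Sequential-recovery LRC: an $(n,k,r,t)_{\mathrm{seq}}$ code is an $[n,k]$ linear code $\mathcal{C}\subseteq\mathbb{F}_q^n$ such that for every $E\subseteq[n]$ with $1\le|E|=u\le t$ there is an ordering $\ell_1,\dots,\ell_u$ of $E$ and sets $R_j\subseteq[n]$, $|R_j|\le r$, $R_j\cap\{\ell_j,\dots,\ell_u\}=\emptyset$, with coefficients $a_{j,i}\in\mathbb{F}_q$ such that $c_{\ell_j}=\sum_{i\in R_j}a_{j,i}c_i$ for all $c\in\mathcal{C}$, $j\in[u]$. *)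

theory Defs
  imports Main "HOL-Library.Z2" Complex_Main
begin

instance bit :: finite
proof
  have "UNIV = {0::bit, 1}" by (auto intro: bit.exhaust)
  then show "finite (UNIV :: bit set)" by (metis finite.emptyI finite.insertI)
qed

text \<open>Words of length n over a field 'a are functions nat => 'a vanishing outside {0..<n};
  coordinate positions are 0..<n (the paper's [n]).\<close>

definition words :: "nat \<Rightarrow> (nat \<Rightarrow> 'a::zero) set" where
  "words n = {c. \<forall>i. n \<le> i \<longrightarrow> c i = 0}"

definition linear_code :: "nat \<Rightarrow> (nat \<Rightarrow> 'a::field) set \<Rightarrow> bool" where
  "linear_code n C \<longleftrightarrow> C \<subseteq> words n \<and> (\<lambda>_. 0) \<in> C
     \<and> (\<forall>c\<in>C. \<forall>d\<in>C. (\<lambda>i. c i + d i) \<in> C)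
     \<and> (\<forall>a. \<forall>c\<in>C. (\<lambda>i. a * c i) \<in> C)"

text \<open>An [n,k] linear code over a finite field F_q: a subspace of dimension k,
  i.e. a subspace with exactly q^k codewords.\<close>
definition nk_code :: "nat \<Rightarrow> nat \<Rightarrow> (nat \<Rightarrow> 'a::{field,finite}) set \<Rightarrow> bool" where
  "nk_code n k C \<longleftrightarrow> linear_code n C \<and> card C = card (UNIV :: 'a set) ^ k"

definition seq_LRC :: "nat \<Rightarrow> nat \<Rightarrow> nat \<Rightarrow> nat \<Rightarrow> (nat \<Rightarrow> 'a::{field,finite}) set \<Rightarrow> bool" where
  "seq_LRC n k r t C \<longleftrightarrow> nk_code n k C \<and>
     (\<forall>E. E \<subseteq> {0..<n} \<and> 1 \<le> card E \<and> card E \<le> t \<longrightarrow>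
        (\<exists>ls. distinct ls \<and> set ls = E \<and>
           (\<forall>j < length ls. \<exists>R a. R \<subseteq> {0..<n} \<and> card R \<le> r \<and>
               R \<inter> set (drop j ls) = {} \<and>
               (\<forall>c\<in>C. c (ls ! j) = (\<Sum>i\<in>R. a i * c i)))))"

end

theory Submission
  imports Defs "HOL-Library.FuncSet" "HOL-Library.Nat_Bijection" "HOL-Library.Countable"
begin


declare add_bit_eq_xor[simp del]

lemma bit_add_self[simp]: "(x::bit) + x = 0" by (cases x) simp_all

lemma seq_from_checks:
  fixes C :: "(nat \<Rightarrow> 'a::field) set"
  assumes H: "\<And>E. E \<subseteq> {0..<n} \<Longrightarrow> E \<noteq> {} \<Longrightarrow> card E \<le> t \<Longrightarrow>
     (\<exists>i\<in>E. \<exists>Q. Q \<subseteq> {0..<n} \<and> card Q \<le> r \<and> Q \<inter> E = {} \<and> (\<forall>c\<in>C. c i = (\<Sum>j\<in>Q. c j)))"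
  shows "E \<subseteq> {0..<n} \<Longrightarrow> 1 \<le> card E \<Longrightarrow> card E \<le> t \<Longrightarrow>
        (\<exists>ls. distinct ls \<and> set ls = E \<and>
           (\<forall>j < length ls. \<exists>R a. R \<subseteq> {0..<n} \<and> card R \<le> r \<and>
               R \<inter> set (drop j ls) = {} \<and>
               (\<forall>c\<in>C. c (ls ! j) = (\<Sum>i\<in>R. a i * c i))))"
proof (induction "card E" arbitrary: E rule: less_induct)
  case less
  have fin: "finite E" using less.prems(1) finite_subset by blast
  have ne: "E \<noteq> {}" using less.prems(2) by auto
  obtain i Q where i: "i \<in> E" and Q: "Q \<subseteq> {0..<n}" "card Q \<le> r" "Q \<inter> E = {}"
     "\<forall>c\<in>C. c i = (\<Sum>j\<in>Q. c j)"
    using H[OF less.prems(1) ne less.prems(3)] by blast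
  have Qr: "\<forall>c\<in>C. c i = (\<Sum>j\<in>Q. (\<lambda>_. 1) j * c j)" using Q(4) by simp
  show ?case
  proof (cases "E - {i} = {}")
    case True
    then have "E = {i}" using i by auto
    then show ?thesis
      apply (intro exI[of _ "[i]"])
      using Q Qr by (auto intro!: exI[of _ Q] exI[of _ "\<lambda>_. 1"])
  next
    case False
    have cl: "card (E - {i}) < card E" using fin i by (meson card_Diff1_less)
    have "card (E - {i}) \<ge> 1" using False fin by (simp add: Suc_leI card_gt_0_iff)
    moreover have "E - {i} \<subseteq> {0..<n}" "card (E - {i}) \<le> t" using less.prems cl by auto
    ultimately obtain ls where ls: "distinct ls" "set ls = E - {i}"
      "\<forall>j < length ls. \<exists>R a. R \<subseteq> {0..<n} \<and> card R \<le> r \<and>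
               R \<inter> set (drop j ls) = {} \<and>
               (\<forall>c\<in>C. c (ls ! j) = (\<Sum>i\<in>R. a i * c i))"
      using less.hyps[OF cl] less.prems by auto
    show ?thesis
    proof (intro exI[of _ "i # ls"] conjI allI impI)
      show "distinct (i # ls)" using ls by auto
      show "set (i # ls) = E" using ls i by auto
      fix j assume j: "j < length (i # ls)"
      show "\<exists>R a. R \<subseteq> {0..<n} \<and> card R \<le> r \<and> R \<inter> set (drop j (i # ls)) = {} \<and>
               (\<forall>c\<in>C. c ((i # ls) ! j) = (\<Sum>i\<in>R. a i * c i))"
      proof (cases j)
        case 0
        then show ?thesis using Q Qr ls i
          by (intro exI[of _ Q] exI[of _ "\<lambda>_. 1"]) auto
      next
        case (Suc j')
        then show ?thesis using ls(3) j by auto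
      qed
    qed
  qed
qed

lemma card_UNIV_bit2: "card (UNIV :: bit set) = 2"
proof -
  have "UNIV = {0::bit, 1}" by (auto intro: bit.exhaust)
  then show ?thesis by (metis card_2_iff zero_neq_one)
qed

lemma card_words_bit: "card (words k :: (nat \<Rightarrow> bit) set) = 2 ^ k"
proof -
  define P :: "(nat \<Rightarrow> bit) set" where "P = PiE {0..<k} (\<lambda>_. UNIV)"
  define f :: "(nat \<Rightarrow> bit) \<Rightarrow> (nat \<Rightarrow> bit)" where "f = (\<lambda>g i. if i < k then g i else 0)"
  have "words k = f ` P"
    unfolding words_def
  proof (safe)
    fix c :: "nat \<Rightarrow> bit" assume c: "\<forall>i. k \<le> i \<longrightarrow> c i = 0"
    show "c \<in> f ` P"
      by (rule image_eqI[of _ _ "restrict c {0..<k}"]) (use c in \<open>auto simp: fun_eq_iff f_def P_def restrict_PiE_iff\<close>)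
  qed (auto simp: f_def)
  moreover have "inj_on f P"
    by (auto simp: inj_on_def fun_eq_iff f_def P_def PiE_iff extensional_def) (metis atLeastLessThan_iff zero_le)
  ultimately have "card (words k :: (nat \<Rightarrow> bit) set) = card P"
    by (simp add: card_image)
  also have "\<dots> = 2 ^ k" by (simp add: card_PiE card_UNIV_bit2 P_def)
  finally show ?thesis .
qed


definition gwf :: "'d set \<Rightarrow> ('d \<Rightarrow> 'd) \<Rightarrow> ('d \<Rightarrow> 'd) \<Rightarrow> bool" where
  "gwf D iv vt \<longleftrightarrow> finite D \<and> (\<forall>d\<in>D. iv d \<in> D \<and> iv (iv d) = d \<and> vt d \<in> D \<and> vt (vt d) = vt d)"

definition rwalk :: "'d set \<Rightarrow> ('d \<Rightarrow> 'd) \<Rightarrow> ('d \<Rightarrow> 'd) \<Rightarrow> 'd list \<Rightarrow> bool" where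
  "rwalk D iv vt ws \<longleftrightarrow> set ws \<subseteq> D \<and> (\<forall>d\<in>set ws. iv d \<noteq> d) \<and>
     (\<forall>i. Suc i < length ws \<longrightarrow> vt (iv (ws!i)) = vt (ws!Suc i) \<and> ws!Suc i \<noteq> iv (ws!i))"

definition closedw :: "('d \<Rightarrow> 'd) \<Rightarrow> ('d \<Rightarrow> 'd) \<Rightarrow> 'd list \<Rightarrow> bool" where
  "closedw iv vt ws \<longleftrightarrow> ws \<noteq> [] \<and> vt (iv (last ws)) = vt (hd ws) \<and> hd ws \<noteq> iv (last ws)"

definition girth_gt :: "nat \<Rightarrow> 'd set \<Rightarrow> ('d \<Rightarrow> 'd) \<Rightarrow> ('d \<Rightarrow> 'd) \<Rightarrow> bool" where
  "girth_gt g D iv vt \<longleftrightarrow> (\<forall>ws. rwalk D iv vt ws \<and> closedw iv vt ws \<longrightarrow> g < length ws)"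

definition semidist :: "nat \<Rightarrow> 'd set \<Rightarrow> ('d \<Rightarrow> 'd) \<Rightarrow> ('d \<Rightarrow> 'd) \<Rightarrow> bool" where
  "semidist m D iv vt \<longleftrightarrow> (\<forall>ws. rwalk D iv vt ws \<and> ws \<noteq> [] \<and> iv (vt (hd ws)) = vt (hd ws)
      \<and> iv (vt (iv (last ws))) = vt (iv (last ws)) \<longrightarrow> m \<le> length ws)"

definition semi_ok :: "'d set \<Rightarrow> ('d \<Rightarrow> 'd) \<Rightarrow> ('d \<Rightarrow> 'd) \<Rightarrow> bool" where
  "semi_ok D iv vt \<longleftrightarrow> (\<forall>d\<in>D. iv d = d \<longrightarrow> vt d = d)"

definition edge :: "('d \<Rightarrow> 'd) \<Rightarrow> 'd \<Rightarrow> 'd set" where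
  "edge iv d = {d, iv d}"

lemma edge_eq_iff:
  assumes "iv (iv a) = a" "iv (iv b) = b"
  shows "edge iv a = edge iv b \<longleftrightarrow> b = a \<or> b = iv a"
  using assms unfolding edge_def by (auto simp: doubleton_eq_iff)

lemma rwalk_seg:
  assumes "\<And>k. w k \<in> D" "\<And>k. vt (w (Suc k)) = vt (iv (w k))" "\<And>k. w (Suc k) \<noteq> iv (w k)"
    and "\<And>k. a \<le> k \<Longrightarrow> k < b \<Longrightarrow> iv (w k) \<noteq> w k"
  shows "rwalk D iv vt (map w [a..<b])"
  using assms unfolding rwalk_def by (auto simp: nth_Cons') 

lemma stopping:
  assumes G: "gwf D iv vt" and S: "semi_ok D iv vt" and gi: "girth_gt t D iv vt"
    and sd: "semidist (t - 1) D iv vt"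
    and F: "F \<subseteq> D" "F \<noteq> {}" "\<And>d. d \<in> F \<Longrightarrow> iv d \<in> F"
    and st: "\<And>d. d \<in> F \<Longrightarrow> \<exists>d'\<in>F. vt d' = vt d \<and> d' \<noteq> d"
  shows "t < card (edge iv ` F)"
proof -
  have inv: "\<And>d. d \<in> D \<Longrightarrow> iv (iv d) = d" and finD: "finite D"
    using G unfolding gwf_def by auto
  have finF: "finite (edge iv ` F)" using F(1) finD finite_subset by blast
  define nxt where "nxt d = (SOME d'. d' \<in> F \<and> vt d' = vt (iv d) \<and> d' \<noteq> iv d)" for d
  have nxt: "nxt d \<in> F \<and> vt (nxt d) = vt (iv d) \<and> nxt d \<noteq> iv d" if "d \<in> F" for d
  proof -
    have "\<exists>d'. d' \<in> F \<and> vt d' = vt (iv d) \<and> d' \<noteq> iv d" using st[OF F(3)[OF that]] by metis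
    then show ?thesis unfolding nxt_def by (rule someI_ex)
  qed
  define d0 where "d0 = (if \<exists>p\<in>F. iv p = p then (SOME p. p \<in> F \<and> iv p = p) else (SOME p. p \<in> F))"
  have d0F: "d0 \<in> F" and d0s: "(\<exists>p\<in>F. iv p = p) \<Longrightarrow> iv d0 = d0"
  proof -
    show "d0 \<in> F"
    proof (cases "\<exists>p\<in>F. iv p = p")
      case True
      then have "\<exists>p. p \<in> F \<and> iv p = p" by blast
      from someI_ex[OF this] show ?thesis unfolding d0_def using True by simp
    next
      case False
      have "\<exists>p. p \<in> F" using F(2) by blast
      from someI_ex[OF this] show ?thesis unfolding d0_def using False by simp
    qed
    assume T: "\<exists>p\<in>F. iv p = p"
    then have "\<exists>p. p \<in> F \<and> iv p = p" by blast
    from someI_ex[OF this] show "iv d0 = d0" unfolding d0_def using T by simp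
  qed
  define w where "w k = (nxt ^^ k) d0" for k
  have wF: "w k \<in> F" for k by (induction k) (auto simp: w_def d0F nxt)
  have wD: "w k \<in> D" for k using wF F(1) by auto
  have w1: "vt (w (Suc k)) = vt (iv (w k))" and w2: "w (Suc k) \<noteq> iv (w k)" for k
    using nxt[OF wF[of k]] by (auto simp: w_def)
  have winv: "iv (iv (w k)) = w k" for k using inv wD by auto
  define Bad where "Bad j \<longleftrightarrow> iv (w j) = w j \<or> (\<exists>i<j. edge iv (w i) = edge iv (w j))" for j
  define N where "N = card (edge iv ` F)"
  have exBad: "\<exists>j. 1 \<le> j \<and> Bad j"
  proof (rule ccontr)
    assume "\<not> ?thesis"
    then have nb: "\<And>j. 1 \<le> j \<Longrightarrow> \<not> Bad j" by auto
    have "inj_on (\<lambda>k. edge iv (w k)) {0..N}"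
    proof (rule inj_onI)
      fix i j assume "i \<in> {0..N}" "j \<in> {0..N}" "edge iv (w i) = edge iv (w j)"
      note e = this
      show "i = j"
      proof (rule ccontr)
        assume "i \<noteq> j"
        then consider "i < j" | "j < i" by linarith
        then show False
        proof cases
          case 1 then show False using nb[of j] e(3) unfolding Bad_def by auto
        next
          case 2 then show False using nb[of i] e(3) unfolding Bad_def by auto
        qed
      qed
    qed
    then have "card ((\<lambda>k. edge iv (w k)) ` {0..N}) = Suc N" by (simp add: card_image)
    moreover have "(\<lambda>k. edge iv (w k)) ` {0..N} \<subseteq> edge iv ` F" using wF by auto
    ultimately show False using card_mono[OF finF, of "(\<lambda>k. edge iv (w k)) ` {0..N}"] N_def by simp
  qed
  define J where "J = (LEAST j. 1 \<le> j \<and> Bad j)"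
  have J1: "1 \<le> J" and BJ: "Bad J" using LeastI_ex[OF exBad] unfolding J_def by auto
  have nB: "\<not> Bad j" if "1 \<le> j" "j < J" for j using not_less_Least[of j "\<lambda>j. 1 \<le> j \<and> Bad j"] that
    unfolding J_def by auto
  have ordj: "iv (w j) \<noteq> w j" if "1 \<le> j" "j < J" for j using nB[OF that] unfolding Bad_def by auto
  have dist: "edge iv (w i) \<noteq> edge iv (w j)" if "i < j" "j < J" for i j
    using nB[of j] that unfolding Bad_def by auto
  have cardJ: "card ((\<lambda>k. edge iv (w k)) ` {0..<m}) = m" if "m \<le> J" for m
  proof -
  have "inj_on (\<lambda>k. edge iv (w k)) {0..<m}"
  proof (rule inj_onI)
    fix i j assume ij: "i \<in> {0..<m}" "j \<in> {0..<m}" "edge iv (w i) = edge iv (w j)"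
    show "i = j"
    proof (rule ccontr)
      assume "i \<noteq> j"
      then consider "i < j" | "j < i" by linarith
      then show False
      proof cases
        case 1 then show False using dist[of i j] ij that by auto
      next
        case 2 then show False using dist[of j i] ij that by auto
      qed
    qed
  qed
  then show ?thesis by (simp add: card_image)
  qed
  have cardle: "m \<le> card (edge iv ` F)" if "card ((\<lambda>k. edge iv (w k)) ` {0..<m}) = m" for m
  proof -
    have "(\<lambda>k. edge iv (w k)) ` {0..<m} \<subseteq> edge iv ` F" using wF by auto
    from card_mono[OF finF this] that show ?thesis by simp
  qed
  have ge: "J \<le> card (edge iv ` F)" using cardJ[of J] cardle by auto
  have eqE: "edge iv (w i) = edge iv (w j) \<longleftrightarrow> w j = w i \<or> w j = iv (w i)" for i j
    by (rule edge_eq_iff[OF winv[of i] winv[of j]])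
  have gir: "t < length ws" if "rwalk D iv vt ws" "closedw iv vt ws" for ws
    using gi that unfolding girth_gt_def by auto
  show ?thesis
  proof (cases "\<exists>i<J. edge iv (w i) = edge iv (w J)")
    case True
    then obtain i where i: "i < J" "w J = w i \<or> w J = iv (w i)" using eqE by blast
    show ?thesis
    proof (cases "iv (w i) = w i")
      case True
      then have i0: "i = 0" using ordj[of i] i(1) by (cases i) auto
      have wJ: "w J = w 0" using i True i0 by auto
      have J2: "2 \<le> J"
      proof (rule ccontr)
        assume "\<not> 2 \<le> J"
        then have "J = 1" using J1 by auto
        then show False using w2[of 0] wJ True i0 by simp
      qed
      let ?ws = "map w [1..<J]"
      have rw: "rwalk D iv vt ?ws" by (rule rwalk_seg[where w=w and D=D and vt=vt and iv=iv, OF wD w1 w2]) (use ordj in auto)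
      have cl: "closedw iv vt ?ws"
        unfolding closedw_def
      proof (intro conjI)
        show "?ws \<noteq> []" using J2 by auto
        have l: "last ?ws = w (J - 1)" using J2 by (simp add: last_map)
        have h: "hd ?ws = w 1" using J2 by (simp add: hd_map upt_conv_Cons)
        have "vt (iv (w (J - 1))) = vt (w J)" using w1[of "J - 1"] J2 by simp
        also have "\<dots> = vt (w 1)" using wJ w1[of 0] True i0 by simp
        finally show "vt (iv (last ?ws)) = vt (hd ?ws)" using l h by simp
        show "hd ?ws \<noteq> iv (last ?ws)"
        proof (cases "J = 2")
          case True
          then show ?thesis using l h ordj[of 1] by auto
        next
          case False
          then have "edge iv (w 1) \<noteq> edge iv (w (J - 1))" using dist[of 1 "J - 1"] J2 by auto
          then show ?thesis using l h eqE winv by metis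
        qed
      qed
      have "t < J - 1" using gir[OF rw cl] by simp
      then show ?thesis using ge by linarith
    next
      case False
      note ordi = False
      show ?thesis
      proof (cases "w J = w i")
        case True
        let ?ws = "map w [i..<J]"
        have ordk: "iv (w k) \<noteq> w k" if "i \<le> k" "k < J" for k
        proof (cases "k = i")
          case True then show ?thesis using ordi by simp
        next
          case False then have "1 \<le> k" using that by simp
          then show ?thesis using ordj that by simp
        qed
        have rw: "rwalk D iv vt ?ws" by (rule rwalk_seg[where w=w and D=D and vt=vt and iv=iv, OF wD w1 w2]) (use ordk in auto)
        have cl: "closedw iv vt ?ws"
          unfolding closedw_def
        proof (intro conjI)
          show "?ws \<noteq> []" using i by auto
          have l: "last ?ws = w (J - 1)" using i by (simp add: last_map)
          have h: "hd ?ws = w i" using i by (simp add: hd_map upt_conv_Cons)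
          show "vt (iv (last ?ws)) = vt (hd ?ws)" using l h w1[of "J - 1"] True i J1 by simp
          show "hd ?ws \<noteq> iv (last ?ws)" using l h w2[of "J - 1"] True J1 by simp
        qed
        have "t < J - i" using gir[OF rw cl] by simp
        then show ?thesis using ge by linarith
      next
        case False
        then have wJ: "w J = iv (w i)" using i by auto
        have Ji: "Suc i < J" using w2[of i] wJ i(1) by (metis Suc_lessI)
        let ?ws = "map w [Suc i..<J]"
        have rw: "rwalk D iv vt ?ws" by (rule rwalk_seg[where w=w and D=D and vt=vt and iv=iv, OF wD w1 w2]) (use ordj in auto)
        have cl: "closedw iv vt ?ws"
          unfolding closedw_def
        proof (intro conjI)
          show "?ws \<noteq> []" using Ji by auto
          have l: "last ?ws = w (J - 1)" using Ji by (simp add: last_map)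
          have h: "hd ?ws = w (Suc i)" using Ji by (simp add: hd_map upt_conv_Cons)
          show "vt (iv (last ?ws)) = vt (hd ?ws)" using l h w1[of "J - 1"] w1[of i] wJ Ji by simp
          show "hd ?ws \<noteq> iv (last ?ws)"
          proof (cases "Suc i = J - 1")
            case True
            then show ?thesis using l h ordj[of "Suc i"] Ji by auto
          next
            case False
            then have "edge iv (w (Suc i)) \<noteq> edge iv (w (J - 1))" using dist[of "Suc i" "J - 1"] Ji by auto
            then show ?thesis using l h eqE winv by metis
          qed
        qed
        have "t < J - Suc i" using gir[OF rw cl] by simp
        then show ?thesis using ge by linarith
      qed
    qed
  next
    case False
    then have sJ: "iv (w J) = w J" using BJ unfolding Bad_def by auto
    then have s0: "iv (w 0) = w 0" using d0s wF[of J] by (auto simp: w_def)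
    have vt0: "vt (w 0) = w 0" using S s0 wD unfolding semi_ok_def by auto
    have vtJ: "vt (w J) = w J" using S sJ wD unfolding semi_ok_def by auto
    have J2: "2 \<le> J"
    proof (rule ccontr)
      assume "\<not> 2 \<le> J"
      then have "J = 1" using J1 by auto
      then have "vt (w 1) = w 1" using vtJ by simp
      moreover have "vt (w 1) = w 0" using w1[of 0] s0 vt0 by simp
      ultimately show False using w2[of 0] s0 by simp
    qed
    have cardJ1: "card ((\<lambda>k. edge iv (w k)) ` {0..<Suc J}) = Suc J"
    proof -
    have "inj_on (\<lambda>k. edge iv (w k)) {0..<Suc J}"
    proof (rule inj_onI)
      fix i j assume ij: "i \<in> {0..<Suc J}" "j \<in> {0..<Suc J}" "edge iv (w i) = edge iv (w j)"
      have d2: "edge iv (w i) \<noteq> edge iv (w j)" if "i < j" "j \<le> J" for i j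
        using dist[of i j] False that by (cases "j = J") auto
      show "i = j"
      proof (rule ccontr)
        assume "i \<noteq> j"
        then consider "i < j" | "j < i" by linarith
        then show False
        proof cases
          case 1 then show False using d2[of i j] ij by auto
        next
          case 2 then show False using d2[of j i] ij by auto
        qed
      qed
    qed
    then show ?thesis by (simp add: card_image)
    qed
    have ge2: "Suc J \<le> card (edge iv ` F)" using cardle[OF cardJ1] .
    let ?ws = "map w [1..<J]"
    have rw: "rwalk D iv vt ?ws" by (rule rwalk_seg[where w=w and D=D and vt=vt and iv=iv, OF wD w1 w2]) (use ordj in auto)
    have l: "last ?ws = w (J - 1)" using J2 by (simp add: last_map)
    have h: "hd ?ws = w 1" using J2 by (simp add: hd_map upt_conv_Cons)
    have "t - 1 \<le> length ?ws"
      using sd rw J2 unfolding semidist_def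
      apply (elim allE[of _ ?ws])
      using l h w1[of 0] w1[of "J - 1"] s0 vt0 vtJ sJ by auto
    then show ?thesis using ge2 J2 by simp
  qed
qed


primrec ov :: "'d set \<Rightarrow> ('d \<Rightarrow> 'd) \<Rightarrow> ('d \<Rightarrow> 'd) \<Rightarrow> ('d set \<Rightarrow> bit) \<Rightarrow> nat \<Rightarrow> 'd \<Rightarrow> bit" where
  "ov D iv vt x 0 v = 0"
| "ov D iv vt x (Suc m) v = (\<Sum>d\<in>{d\<in>D. vt d = v} - {v}.
      (if vt (iv d) \<noteq> iv d then x (edge iv d) else ov D iv vt x m (iv d)))"

locale gcode =
  fixes D :: "'d set" and iv vt :: "'d \<Rightarrow> 'd" and h :: "'d \<Rightarrow> nat" and r t :: nat
  assumes G: "gwf D iv vt" and S: "semi_ok D iv vt" and gi: "girth_gt t D iv vt"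
    and sd: "semidist (t - 1) D iv vt" and t1: "1 \<le> t"
    and deg: "\<And>d. d \<in> D \<Longrightarrow> card {d'\<in>D. vt d' = vt d} = Suc r"
    and outs1: "\<And>d. d \<in> D \<Longrightarrow> vt d = d \<Longrightarrow> vt (iv d) = iv d \<Longrightarrow> iv d = d"
    and outs2: "\<And>d. d \<in> D \<Longrightarrow> vt d \<noteq> d \<Longrightarrow> vt (iv d) = iv d \<Longrightarrow> h (iv d) < h (vt d)"
begin

lemma finD: "finite D" using G unfolding gwf_def by auto
lemma ivD: "d \<in> D \<Longrightarrow> iv d \<in> D" using G unfolding gwf_def by auto
lemma ivv: "d \<in> D \<Longrightarrow> iv (iv d) = d" using G unfolding gwf_def by auto
lemma vtD: "d \<in> D \<Longrightarrow> vt d \<in> D" using G unfolding gwf_def by auto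
lemma vtvt: "d \<in> D \<Longrightarrow> vt (vt d) = vt d" using G unfolding gwf_def by auto

lemma edge_iv: "d \<in> D \<Longrightarrow> edge iv (iv d) = edge iv d" unfolding edge_def using ivv by auto

lemma edge_eq: "a \<in> D \<Longrightarrow> b \<in> D \<Longrightarrow> edge iv a = edge iv b \<longleftrightarrow> b = a \<or> b = iv a"
  by (rule edge_eq_iff) (auto simp: ivv)

lemma noloop: "d \<in> D \<Longrightarrow> iv d \<noteq> d \<Longrightarrow> vt (iv d) \<noteq> vt d"
proof
  assume d: "d \<in> D" "iv d \<noteq> d" "vt (iv d) = vt d"
  have "rwalk D iv vt [d]" using d unfolding rwalk_def by auto
  moreover have "closedw iv vt [d]" using d unfolding closedw_def by auto
  ultimately have "t < 1" using gi unfolding girth_gt_def by fastforce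
  then show False using t1 by simp
qed

definition "I = {d\<in>D. vt d \<noteq> d \<and> vt (iv d) \<noteq> iv d}"

definition dval :: "('d set \<Rightarrow> bit) \<Rightarrow> 'd \<Rightarrow> bit" where
  "dval x d = (if d \<in> I then x (edge iv d)
     else if vt d = d then ov D iv vt x (Suc (h d)) d else ov D iv vt x (Suc (h (iv d))) (iv d))"

lemma ov_stab:
  assumes "v \<in> D" "vt v = v" "h v < m"
  shows "ov D iv vt x m v = ov D iv vt x (Suc (h v)) v"
  using assms
proof (induction "h v" arbitrary: v m rule: less_induct)
  case less
  obtain m' where m': "m = Suc m'" "h v \<le> m'" using less.prems(3) by (cases m) auto
  have "ov D iv vt x m v = ov D iv vt x (Suc (h v)) v" unfolding m'(1) ov.simps
  proof (rule sum.cong[OF refl])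
    fix d assume d: "d \<in> {d \<in> D. vt d = v} - {v}"
    show "(if vt (iv d) \<noteq> iv d then x (edge iv d) else ov D iv vt x m' (iv d)) =
          (if vt (iv d) \<noteq> iv d then x (edge iv d) else ov D iv vt x (h v) (iv d))"
    proof (cases "vt (iv d) = iv d")
      case True
      have dD: "d \<in> D" "vt d = v" "d \<noteq> v" using d by auto
      have hl: "h (iv d) < h v" using outs2[OF dD(1)] True dD by auto
      have a: "ov D iv vt x m' (iv d) = ov D iv vt x (Suc (h (iv d))) (iv d)"
        using less.hyps[OF hl] ivD[OF dD(1)] True hl m'(2) by auto
      have b: "ov D iv vt x (h v) (iv d) = ov D iv vt x (Suc (h (iv d))) (iv d)"
        using less.hyps[OF hl] ivD[OF dD(1)] True hl by auto
      show ?thesis using a b by simp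
    qed simp
  qed
  then show ?case .
qed

lemma dval_out:
  assumes "v \<in> D" "vt v = v"
  shows "dval x v = (\<Sum>d\<in>{d\<in>D. vt d = v} - {v}. dval x d)"
proof -
  have vI: "v \<notin> I" using assms unfolding I_def by auto
  have "dval x v = ov D iv vt x (Suc (h v)) v" using vI assms unfolding dval_def by simp
  also have "\<dots> = (\<Sum>d\<in>{d\<in>D. vt d = v} - {v}. dval x d)"
    unfolding ov.simps
  proof (rule sum.cong[OF refl])
    fix d assume d: "d \<in> {d \<in> D. vt d = v} - {v}"
    have dD: "d \<in> D" "vt d = v" "d \<noteq> v" using d by auto
    show "(if vt (iv d) \<noteq> iv d then x (edge iv d) else ov D iv vt x (h v) (iv d)) = dval x d"
    proof (cases "vt (iv d) = iv d")
      case True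
      have hl: "h (iv d) < h v" using outs2[OF dD(1)] True dD by auto
      have "ov D iv vt x (h v) (iv d) = ov D iv vt x (Suc (h (iv d))) (iv d)"
        using ov_stab[OF ivD[OF dD(1)] True hl] .
      then show ?thesis using True dD unfolding dval_def I_def by auto
    next
      case False
      then show ?thesis using dD unfolding dval_def I_def by auto
    qed
  qed
  finally show ?thesis .
qed

lemma dval_iv: "d \<in> D \<Longrightarrow> dval x (iv d) = dval x d"
proof -
  assume d: "d \<in> D"
  show ?thesis
  proof (cases "d \<in> I")
    case True
    then have "iv d \<in> I" using d ivD ivv unfolding I_def by auto
    then show ?thesis using True d edge_iv unfolding dval_def by simp
  next
    case False
    show ?thesis
    proof (cases "iv d = d")
      case True then show ?thesis by simp
    next
      case nd: False
      have ivI: "iv d \<notin> I" using False d ivD ivv unfolding I_def by auto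
      show ?thesis
      proof (cases "vt d = d")
        case True
        have "vt (iv d) \<noteq> iv d" using outs1[OF d True] nd by auto
        then show ?thesis using True False ivI d ivv unfolding dval_def by simp
      next
        case vf: False
        then have "vt (iv d) = iv d" using False d unfolding I_def by auto
        then show ?thesis using vf False ivI d ivv unfolding dval_def by simp
      qed
    qed
  qed
qed

lemma dval_check:
  assumes "d \<in> D"
  shows "dval x d = (\<Sum>d'\<in>{d'\<in>D. vt d' = vt d} - {d}. dval x d')"
proof -
  let ?v = "vt d"
  let ?A = "{d'\<in>D. vt d' = ?v}"
  have v: "?v \<in> D" "vt ?v = ?v" using vtD vtvt assms by auto
  have fin: "finite ?A" using finD by auto
  have vA: "?v \<in> ?A" and dA: "d \<in> ?A" using v assms by auto
  have tot: "(\<Sum>d'\<in>?A. dval x d') = 0"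
    using sum.remove[OF fin vA, of "dval x"] dval_out[OF v, of x] by simp
  have "(\<Sum>d'\<in>?A. dval x d') = dval x d + (\<Sum>d'\<in>?A - {d}. dval x d')"
    using sum.remove[OF fin dA] .
  then have "dval x d + (\<Sum>d'\<in>?A - {d}. dval x d') = 0" using tot by simp
  then show ?thesis by (metis add_bit_eq_xor bit_add_self add_diff_cancel_right' diff_zero minus_bit_def)
qed

lemma ov_add: "ov D iv vt (\<lambda>e. x e + y e) m v = ov D iv vt x m v + ov D iv vt y m v"
proof (induction m arbitrary: v)
  case 0 then show ?case by simp
next
  case (Suc m)
  show ?case unfolding ov.simps sum.distrib[symmetric]
    by (rule sum.cong[OF refl]) (simp add: Suc)
qed

lemma dval_add: "dval (\<lambda>e. x e + y e) d = dval x d + dval y d"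
  unfolding dval_def ov_add by simp

lemma ov_zero: "ov D iv vt (\<lambda>e. 0) m v = 0"
proof (induction m arbitrary: v)
  case 0 then show ?case by simp
next
  case (Suc m)
  have "ov D iv vt (\<lambda>e. 0) (Suc m) v = (\<Sum>d\<in>{d\<in>D. vt d = v} - {v}. 0)"
    unfolding ov.simps by (rule sum.cong[OF refl]) (simp add: Suc)
  then show ?case by simp
qed

lemma dval_zero: "dval (\<lambda>e. 0) d = 0"
  unfolding dval_def ov_zero by simp

end


context gcode begin

lemma exists_code: "\<exists>C::(nat\<Rightarrow>bit) set. seq_LRC (card (edge iv ` D)) (card (edge iv ` I)) r t C"
proof -
  define n where "n = card (edge iv ` D)"
  define k where "k = card (edge iv ` I)"
  have finE: "finite (edge iv ` D)" using finD by simp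
  have IsD: "I \<subseteq> D" unfolding I_def by auto
  have "finite I" using finD IsD finite_subset by blast
  then have finI: "finite (edge iv ` I)" by simp
  obtain phi where phi: "bij_betw phi {0..<n} (edge iv ` D)"
    using ex_bij_betw_nat_finite[OF finE] n_def by blast
  obtain psi where psi: "bij_betw psi {0..<k} (edge iv ` I)"
    using ex_bij_betw_nat_finite[OF finI] k_def by blast
  define th where "th i = (SOME d. d \<in> D \<and> edge iv d = phi i)" for i
  have th: "th i \<in> D \<and> edge iv (th i) = phi i" if "i < n" for i
  proof -
    have "i \<in> {0..<n}" using that by simp
    then have "phi i \<in> phi ` {0..<n}" by blast
    then have "phi i \<in> edge iv ` D" using phi unfolding bij_betw_def by simp
    then have "\<exists>d. d \<in> D \<and> edge iv d = phi i" by auto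
    then show ?thesis unfolding th_def by (rule someI_ex)
  qed
  define io where "io d = the_inv_into {0..<n} phi (edge iv d)" for d
  have io: "io d < n \<and> phi (io d) = edge iv d" if "d \<in> D" for d
  proof -
    have "edge iv d \<in> phi ` {0..<n}" using phi that unfolding bij_betw_def by auto
    then show ?thesis unfolding io_def
      using the_inv_into_into[of phi "{0..<n}" "edge iv d" "{0..<n}"] f_the_inv_into_f[of phi "{0..<n}"]
        phi unfolding bij_betw_def by auto
  qed
  have io_inj: "io a = io b \<longleftrightarrow> edge iv a = edge iv b" if "a \<in> D" "b \<in> D" for a b
  proof
    assume e: "io a = io b"
    have "edge iv a = phi (io a)" using io[OF that(1)] by simp
    also have "\<dots> = phi (io b)" using e by simp
    also have "\<dots> = edge iv b" using io[OF that(2)] by simp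
    finally show "edge iv a = edge iv b" .
  next
    assume e: "edge iv a = edge iv b"
    have "inj_on phi {0..<n}" using phi unfolding bij_betw_def by auto
    moreover have "phi (io a) = phi (io b)" using io[OF that(1)] io[OF that(2)] e by simp
    ultimately show "io a = io b" using io[OF that(1)] io[OF that(2)] by (simp add: inj_on_def)
  qed
  have io_th: "io (th i) = i" if "i < n" for i
  proof -
    have "phi (io (th i)) = phi i" using io th that by auto
    moreover have "inj_on phi {0..<n}" using phi unfolding bij_betw_def by auto
    ultimately show ?thesis using io th that by (meson atLeastLessThan_iff inj_onD zero_le)
  qed
  define cw where "cw x i = (if i < n then dval x (th i) else 0)" for x i
  have dval_edge: "dval x a = dval x b" if "a \<in> D" "b \<in> D" "edge iv a = edge iv b" for a b x
  proof -
    have "b = a \<or> b = iv a" using edge_eq[OF that(1,2)] that(3) by simp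
    then show ?thesis using dval_iv[OF that(1), of x] by (elim disjE) simp_all
  qed
  have cw_io: "cw x (io d) = dval x d" if "d \<in> D" for x d
  proof -
    have n: "io d < n" using io[OF that] by simp
    have "edge iv (th (io d)) = phi (io d)" using th[OF n] by simp
    also have "\<dots> = edge iv d" using io[OF that] by simp
    finally have "dval x (th (io d)) = dval x d" using dval_edge th[OF n] that by blast
    then show ?thesis unfolding cw_def using n by simp
  qed
  define psinv where "psinv e = the_inv_into {0..<k} psi e" for e
  define X where "X y = (\<lambda>e. y (psinv e))" for y :: "nat \<Rightarrow> bit"
  define C where "C = (\<lambda>y. cw (X y)) ` words k"
  have psinv: "psinv (psi j) = j" if "j < k" for j
    unfolding psinv_def using psi that by (simp add: bij_betw_def the_inv_into_f_f)
  have psiI: "psi j \<in> edge iv ` I" if "j < k" for j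
  proof -
    have "psi j \<in> psi ` {0..<k}" using that by simp
    then show ?thesis using psi unfolding bij_betw_def by simp
  qed
  have cw_add: "cw (X (\<lambda>i. y i + z i)) = (\<lambda>i. cw (X y) i + cw (X z) i)" for y z
    unfolding cw_def X_def by (auto simp: dval_add)
  have cw_zero: "cw (X (\<lambda>i. 0)) = (\<lambda>i. 0)"
    unfolding cw_def X_def by (auto simp: dval_zero)
  have words_add: "(\<lambda>i. y i + z i) \<in> words k" if "y \<in> words k" "z \<in> words k" for y z :: "nat \<Rightarrow> bit"
    using that unfolding words_def by auto
  have lin: "linear_code n C"
    unfolding linear_code_def
  proof (intro conjI ballI allI)
    show "C \<subseteq> words n" unfolding C_def words_def cw_def by auto
    have "(\<lambda>i. 0::bit) \<in> words k" unfolding words_def by auto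
    then show "(\<lambda>_. 0) \<in> C" unfolding C_def by (rule image_eqI[rotated]) (simp add: cw_zero)
    fix c d assume c: "c \<in> C" and d: "d \<in> C"
    then obtain y z where y: "y \<in> words k" "c = cw (X y)" and z: "z \<in> words k" "d = cw (X z)"
      unfolding C_def by auto
    show "(\<lambda>i. c i + d i) \<in> C" unfolding C_def
      by (rule image_eqI[OF _ words_add[OF y(1) z(1)]]) (simp add: cw_add y z)
  next
    fix a :: bit and c assume c: "c \<in> C"
    show "(\<lambda>i. a * c i) \<in> C"
    proof (cases a)
      case zero
      have "(\<lambda>i. 0::bit) \<in> words k" unfolding words_def by auto
      then show ?thesis unfolding C_def zero by (rule image_eqI[rotated]) (simp add: cw_zero)
    next
      case one
      then show ?thesis using c by (simp del: mult_bit_eq_and)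
    qed
  qed
  have inj: "inj_on (\<lambda>y. cw (X y)) (words k)"
  proof (rule inj_onI)
    fix y z assume y: "y \<in> words k" and z: "z \<in> words k" and e: "cw (X y) = cw (X z)"
    show "y = z"
    proof
      fix j
      show "y j = z j"
      proof (cases "j < k")
        case True
        obtain d where d: "d \<in> I" "edge iv d = psi j" using psiI[OF True] by auto
        have dD: "d \<in> D" using d IsD by auto
        have "cw (X y) (io d) = y j" using cw_io[OF dD] d unfolding dval_def X_def using psinv[OF True] by simp
        moreover have "cw (X z) (io d) = z j" using cw_io[OF dD] d unfolding dval_def X_def using psinv[OF True] by simp
        ultimately show ?thesis using e by simp
      next
        case False then show ?thesis using y z unfolding words_def by auto
      qed
    qed
  qed
  have cardC: "card C = card (UNIV :: bit set) ^ k"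
    unfolding C_def using card_image[OF inj] card_words_bit card_UNIV_bit2 by simp
  have rec: "\<exists>i\<in>E. \<exists>Q. Q \<subseteq> {0..<n} \<and> card Q \<le> r \<and> Q \<inter> E = {} \<and> (\<forall>c\<in>C. c i = (\<Sum>j\<in>Q. c j))"
    if E: "E \<subseteq> {0..<n}" "E \<noteq> {}" "card E \<le> t" for E
  proof -
    define F where "F = {d\<in>D. io d \<in> E}"
    have FD: "F \<subseteq> D" unfolding F_def by auto
    have Fne: "F \<noteq> {}"
    proof -
      obtain i where i: "i \<in> E" using E by auto
      then have "th i \<in> F" using th io_th E unfolding F_def by auto
      then show ?thesis by auto
    qed
    have Fiv: "iv d \<in> F" if "d \<in> F" for d
    proof -
      have dD: "d \<in> D" "io d \<in> E" using that unfolding F_def by auto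
      have "io (iv d) = io d" using io_inj[OF ivD[OF dD(1)] dD(1)] edge_iv[OF dD(1)] by simp
      then show ?thesis using dD ivD unfolding F_def by simp
    qed
    have eF: "edge iv ` F = phi ` E"
    proof
      show "edge iv ` F \<subseteq> phi ` E"
      proof
        fix e assume "e \<in> edge iv ` F"
        then obtain d where d: "d \<in> D" "io d \<in> E" "e = edge iv d" unfolding F_def by auto
        then have "e = phi (io d)" using io by simp
        then show "e \<in> phi ` E" using d by blast
      qed
      show "phi ` E \<subseteq> edge iv ` F"
      proof
        fix e assume "e \<in> phi ` E"
        then obtain i where i: "i \<in> E" "e = phi i" by auto
        have "i < n" using i E by auto
        then have "th i \<in> F" "edge iv (th i) = e" using th io_th i unfolding F_def by auto
        then show "e \<in> edge iv ` F" by blast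
      qed
    qed
    have "card (edge iv ` F) = card E"
    proof -
      have "inj_on phi {0..<n}" using phi unfolding bij_betw_def by simp
      then have "inj_on phi E" using E(1) by (rule inj_on_subset)
      then show ?thesis unfolding eF by (rule card_image)
    qed
    then have "\<not> t < card (edge iv ` F)" using E by simp
    then have "\<not> (\<forall>d\<in>F. \<exists>d'\<in>F. vt d' = vt d \<and> d' \<noteq> d)"
      using stopping[OF G S gi sd FD Fne Fiv] by blast
    then obtain d where dF: "d \<in> F" and uniq: "\<And>d'. d' \<in> F \<Longrightarrow> vt d' = vt d \<Longrightarrow> d' = d"
      by blast
    have dD: "d \<in> D" using dF FD by auto
    define A where "A = {d'\<in>D. vt d' = vt d} - {d}"
    have finA: "finite A" unfolding A_def using finD by auto
    have injA: "inj_on io A"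
    proof (rule inj_onI)
      fix a b assume a: "a \<in> A" and b: "b \<in> A" and e: "io a = io b"
      have aD: "a \<in> D" "b \<in> D" using a b unfolding A_def by auto
      have "b = a \<or> b = iv a" using e io_inj[OF aD] edge_eq[OF aD] by simp
      moreover have "vt b = vt a" using a b unfolding A_def by auto
      ultimately show "a = b" using noloop[OF aD(1)] by (metis (no_types))
    qed
    show ?thesis
    proof (intro bexI[of _ "io d"] exI[of _ "io ` A"] conjI ballI)
      show "io d \<in> E" using dF unfolding F_def by auto
      show "io ` A \<subseteq> {0..<n}" using io unfolding A_def by auto
      have "card (io ` A) = card A" using card_image[OF injA] .
      also have "card A = r" unfolding A_def using deg[OF dD] finD dD by (simp add: card_Diff_singleton)
      finally show "card (io ` A) \<le> r" by simp
      show "io ` A \<inter> E = {}"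
      proof (rule ccontr)
        assume "io ` A \<inter> E \<noteq> {}"
        then obtain a where a: "a \<in> A" "io a \<in> E" by auto
        then have "a \<in> F" unfolding F_def A_def by auto
        then show False using uniq a unfolding A_def by auto
      qed
      fix c assume "c \<in> C"
      then obtain y where c: "c = cw (X y)" unfolding C_def by auto
      have "c (io d) = dval (X y) d" using cw_io dD c by simp
      also have "\<dots> = (\<Sum>d'\<in>A. dval (X y) d')" unfolding A_def using dval_check[OF dD] .
      also have "\<dots> = (\<Sum>d'\<in>A. c (io d'))"
        by (rule sum.cong[OF refl]) (simp add: cw_io c A_def)
      also have "\<dots> = (\<Sum>j\<in>io ` A. c j)" using sum.reindex[OF injA, of c] by (simp add: comp_def)
      finally show "c (io d) = (\<Sum>j\<in>io ` A. c j)" .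
    qed
  qed
  have "seq_LRC n k r t C"
    unfolding seq_LRC_def nk_code_def
  proof (intro conjI allI impI)
    show "linear_code n C" by (rule lin)
    show "card C = card (UNIV :: bit set) ^ k" by (rule cardC)
    fix E assume "E \<subseteq> {0..<n} \<and> 1 \<le> card E \<and> card E \<le> t"
    then show "\<exists>ls. distinct ls \<and> set ls = E \<and>
           (\<forall>j < length ls. \<exists>R a. R \<subseteq> {0..<n} \<and> card R \<le> r \<and>
               R \<inter> set (drop j ls) = {} \<and>
               (\<forall>c\<in>C. c (ls ! j) = (\<Sum>i\<in>R. a i * c i)))"
      using seq_from_checks[where C=C and n=n and t=t and r=r, OF rec] by blast
  qed
  then show ?thesis unfolding n_def k_def by blast
qed

end


context gcode begin

lemma card_D: "card D = Suc r * card (vt ` D)"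
proof -
  have D: "D = (\<Union>v\<in>vt ` D. {d\<in>D. vt d = v})" by auto
  have "card D = (\<Sum>v\<in>vt ` D. card {d\<in>D. vt d = v})"
    by (subst D, rule card_UN_disjoint) (use finD in auto)
  also have "\<dots> = (\<Sum>v\<in>vt ` D. Suc r)"
    by (rule sum.cong[OF refl]) (use deg in auto)
  finally show ?thesis by simp
qed

lemma card_edges2: "2 * card (edge iv ` D) = card D + card {d\<in>D. iv d = d}"
proof -
  define Sm where "Sm = {d\<in>D. iv d = d}"
  define Od where "Od = {d\<in>D. iv d \<noteq> d}"
  have finS: "finite Sm" "finite Od" using finD unfolding Sm_def Od_def by auto
  have DSO: "D = Sm \<union> Od" "Sm \<inter> Od = {}" unfolding Sm_def Od_def by auto
  have cD: "card D = card Sm + card Od" using DSO finS by (simp add: card_Un_disjoint)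
  have eD: "edge iv ` D = edge iv ` Sm \<union> edge iv ` Od" using DSO by auto
  have disj: "edge iv ` Sm \<inter> edge iv ` Od = {}"
  proof (rule ccontr)
    assume "edge iv ` Sm \<inter> edge iv ` Od \<noteq> {}"
    then obtain a b where ab: "a \<in> Sm" "b \<in> Od" "edge iv a = edge iv b" by auto
    then have "b = a \<or> b = iv a" using edge_eq[of a b] unfolding Sm_def Od_def by auto
    then show False using ab unfolding Sm_def Od_def by auto
  qed
  have cS: "card (edge iv ` Sm) = card Sm"
  proof (rule card_image, rule inj_onI)
    fix a b assume "a \<in> Sm" "b \<in> Sm" "edge iv a = edge iv b"
    then show "a = b" using edge_eq[of a b] unfolding Sm_def by auto
  qed
  have cO: "card Od = 2 * card (edge iv ` Od)"
  proof -
    have Od: "Od = \<Union>(edge iv ` Od)" unfolding edge_def Od_def using ivD ivv by auto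
    have "card (\<Union>(edge iv ` Od)) = (\<Sum>e\<in>edge iv ` Od. card e)"
    proof (rule card_Union_disjoint)
      show "\<And>e. e \<in> edge iv ` Od \<Longrightarrow> finite e" unfolding edge_def by auto
      show "pairwise disjnt (edge iv ` Od)"
      proof (rule pairwiseI)
        fix e e' assume e: "e \<in> edge iv ` Od" "e' \<in> edge iv ` Od" "e \<noteq> e'"
        then obtain a b where ab: "a \<in> Od" "b \<in> Od" "e = edge iv a" "e' = edge iv b" by auto
        have aD: "a \<in> D" "b \<in> D" using ab unfolding Od_def by auto
        show "disjnt e e'"
        proof (rule ccontr)
          assume "\<not> disjnt e e'"
          then have "b = a \<or> b = iv a \<or> iv b = a \<or> iv b = iv a" using ab unfolding edge_def disjnt_def by auto
          then have "b = a \<or> b = iv a" using ivv aD by metis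
          then show False using edge_eq[OF aD] ab e by auto
        qed
      qed
    qed
    then have "card Od = (\<Sum>e\<in>edge iv ` Od. card e)" using Od[symmetric] by simp
    also have "\<dots> = (\<Sum>e\<in>edge iv ` Od. 2)"
      by (rule sum.cong[OF refl]) (auto simp: edge_def Od_def)
    finally show ?thesis by simp
  qed
  have "card (edge iv ` D) = card (edge iv ` Sm) + card (edge iv ` Od)"
    unfolding eD using disj finS by (simp add: card_Un_disjoint)
  then show ?thesis using cD cS cO unfolding Sm_def by simp
qed

lemma card_edgesI: "card (edge iv ` I) + card (vt ` D) = card (edge iv ` D)"
proof -
  have IsD: "I \<subseteq> D" unfolding I_def by auto
  have vD: "vt ` D \<subseteq> D" using vtD by auto
  have eD: "edge iv ` D = edge iv ` I \<union> edge iv ` (vt ` D)"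
  proof
    show "edge iv ` D \<subseteq> edge iv ` I \<union> edge iv ` (vt ` D)"
    proof
      fix e assume "e \<in> edge iv ` D"
      then obtain d where d: "d \<in> D" "e = edge iv d" by auto
      show "e \<in> edge iv ` I \<union> edge iv ` (vt ` D)"
      proof (cases "d \<in> I")
        case True then show ?thesis using d by auto
      next
        case False
        then have "vt d = d \<or> vt (iv d) = iv d" using d unfolding I_def by auto
        then show ?thesis
        proof
          assume "vt d = d"
          then have "d \<in> vt ` D" using d by force
          then show ?thesis using d by auto
        next
          assume a: "vt (iv d) = iv d"
          then have "iv d \<in> vt ` D" using d ivD by (metis image_eqI)
          moreover have "e = edge iv (iv d)" using d edge_iv by auto
          ultimately show ?thesis by auto
        qed
      qed
    qed
    show "edge iv ` I \<union> edge iv ` (vt ` D) \<subseteq> edge iv ` D" using IsD vD by auto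
  qed
  have disj: "edge iv ` I \<inter> edge iv ` (vt ` D) = {}"
  proof (rule ccontr)
    assume "edge iv ` I \<inter> edge iv ` (vt ` D) \<noteq> {}"
    then obtain a b where ab: "a \<in> I" "b \<in> D" "edge iv a = edge iv (vt b)" by auto
    have aD: "a \<in> D" using ab IsD by auto
    have "vt b = a \<or> vt b = iv a" using edge_eq[OF aD vtD[OF ab(2)]] ab by auto
    then show False using ab vtvt[OF ab(2)] ivv unfolding I_def by auto
  qed
  have inj: "inj_on (edge iv) (vt ` D)"
  proof (rule inj_onI)
    fix a b assume a: "a \<in> vt ` D" and b: "b \<in> vt ` D" and e: "edge iv a = edge iv b"
    have aD: "a \<in> D" "b \<in> D" using a b vD by auto
    have va: "vt a = a" "vt b = b" using a b vtvt by auto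
    have "b = a \<or> b = iv a" using edge_eq[OF aD] e by auto
    then show "a = b" using outs1[OF aD(1) va(1)] va by auto
  qed
  have finI: "finite (edge iv ` I)" using finD IsD finite_subset by blast
  have finV: "finite (edge iv ` (vt ` D))" using finD by simp
  show ?thesis unfolding eD using card_Un_disjoint[OF finI finV disj] card_image[OF inj] by simp
qed

end


lemma rwalk_sub:
  assumes "rwalk D iv vt ps" "a \<le> b" "b \<le> length ps"
  shows "rwalk D iv vt (map ((!) ps) [a..<b])"
proof -
  have m: "ps!k \<in> set ps" if "k < length ps" for k using that by simp
  have s: "set ps \<subseteq> D" "\<forall>d\<in>set ps. iv d \<noteq> d" using assms(1) unfolding rwalk_def by auto
  have A: "set (map ((!) ps) [a..<b]) \<subseteq> D \<and> (\<forall>x\<in>set (map ((!) ps) [a..<b]). iv x \<noteq> x)"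
  proof (intro conjI ballI subsetI)
    fix x assume "x \<in> set (map ((!) ps) [a..<b])"
    then obtain k where "k < length ps" "x = ps!k" using assms by (auto, metis order_less_le_trans)
    then show "x \<in> D" "iv x \<noteq> x" using m s by auto
  qed
  have B: "\<forall>i. Suc i < length (map ((!) ps) [a..<b]) \<longrightarrow> vt (iv (map ((!) ps) [a..<b] ! i)) = vt (map ((!) ps) [a..<b] ! Suc i) \<and>
       map ((!) ps) [a..<b] ! Suc i \<noteq> iv (map ((!) ps) [a..<b] ! i)"
    using assms(1,2,3) unfolding rwalk_def by auto
  show ?thesis unfolding rwalk_def using A B by blast
qed

lemma shorten:
  assumes inv: "\<And>d. d \<in> D \<Longrightarrow> iv (iv d) = d"
    and rw: "rwalk D iv vt ps" and cl: "closedw iv vt ps"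
    and ij: "i < j" "j < length ps" "edge iv (ps!i) = edge iv (ps!j)"
  shows "\<exists>ps'. rwalk D iv vt ps' \<and> closedw iv vt ps' \<and> length ps' < length ps"
proof -
  let ?L = "length ps"
  have psD: "ps!k \<in> D" if "k < ?L" for k using rw that unfolding rwalk_def by auto
  have ordk: "iv (ps!k) \<noteq> ps!k" if "k < ?L" for k using rw that unfolding rwalk_def by auto
  have st1: "vt (iv (ps!k)) = vt (ps!Suc k)" "ps!Suc k \<noteq> iv (ps!k)" if "Suc k < ?L" for k
    using rw that unfolding rwalk_def by auto
  define P where "P g \<longleftrightarrow> 0 < g \<and> (\<exists>i. i + g < ?L \<and> edge iv (ps!i) = edge iv (ps!(i+g)))" for g
  have ex: "P (j - i)" unfolding P_def using ij by (intro conjI exI[of _ i]) auto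
  define G where "G = (LEAST g. P g)"
  have PG: "P G" using LeastI[of P, OF ex] G_def by simp
  have minG: "\<not> P g" if "g < G" for g using not_less_Least[of g P] that G_def by simp
  obtain a where a: "0 < G" "a + G < ?L" "edge iv (ps!a) = edge iv (ps!(a+G))" using PG unfolding P_def by auto
  define b where "b = a + G"
  have eq: "ps!b = ps!a \<or> ps!b = iv (ps!a)"
    using edge_eq_iff[OF inv[OF psD[of a]] inv[OF psD[of b]]] a unfolding b_def by auto
  show ?thesis
  proof (cases "ps!b = ps!a")
    case True
    let ?ws = "map ((!) ps) [a..<b]"
    have r: "rwalk D iv vt ?ws" by (rule rwalk_sub[OF rw]) (use a b_def in auto)
    have l: "last ?ws = ps!(b - 1)" using a b_def by (simp add: last_map)
    have h: "hd ?ws = ps!a" using a b_def by (simp add: hd_map upt_conv_Cons)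
    have "closedw iv vt ?ws" unfolding closedw_def
      using l h st1[of "b - 1"] True a b_def by auto
    then show ?thesis using r a b_def by (intro exI[of _ ?ws]) auto
  next
    case False
    then have bi: "ps!b = iv (ps!a)" using eq by auto
    have G2: "2 \<le> G"
    proof (rule ccontr)
      assume "\<not> 2 \<le> G"
      then have "G = 1" using a by auto
      then show False using st1[of a] bi a b_def by auto
    qed
    let ?ws = "map ((!) ps) [Suc a..<b]"
    have r: "rwalk D iv vt ?ws" by (rule rwalk_sub[OF rw]) (use a b_def G2 in auto)
    have l: "last ?ws = ps!(b - 1)" using a b_def G2 by (simp add: last_map)
    have h: "hd ?ws = ps!(Suc a)" using a b_def G2 by (simp add: hd_map upt_conv_Cons)
    have c1: "vt (iv (last ?ws)) = vt (hd ?ws)"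
      using l h st1[of "b - 1"] st1[of a] bi a b_def G2 by auto
    have c2: "hd ?ws \<noteq> iv (last ?ws)"
    proof (cases "G = 2")
      case True
      then have "Suc a = b - 1" using b_def by auto
      then show ?thesis using l h ordk[of "Suc a"] a b_def by auto
    next
      case False
      show ?thesis
      proof
        assume e: "hd ?ws = iv (last ?ws)"
        have "edge iv (ps!(Suc a)) = edge iv (ps!(Suc a + (G - 2)))"
        proof -
          have "Suc a + (G - 2) = b - 1" using b_def G2 by auto
          moreover have "ps!(Suc a) = iv (ps!(b - 1))" using e l h by simp
          moreover have "ps!(b-1) \<in> D" using psD a b_def by auto
          ultimately show ?thesis unfolding edge_def using inv by auto
        qed
        then have "P (G - 2)" unfolding P_def using False G2 a b_def by (intro conjI exI[of _ "Suc a"]) auto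
        then show False using minG[of "G - 2"] G2 by auto
      qed
    qed
    have "closedw iv vt ?ws" unfolding closedw_def using c1 c2 a b_def G2 by auto
    then show ?thesis using r a b_def by (intro exI[of _ ?ws]) auto
  qed
qed


definition ginv :: "nat \<Rightarrow> nat \<Rightarrow> nat \<Rightarrow> nat \<Rightarrow> 'd set \<Rightarrow> ('d \<Rightarrow> 'd) \<Rightarrow> ('d \<Rightarrow> 'd) \<Rightarrow> ('d \<Rightarrow> nat) \<Rightarrow> bool" where
  "ginv r m PH VH D iv vt h \<longleftrightarrow> D \<noteq> {} \<and> gwf D iv vt \<and> semi_ok D iv vt \<and> semidist m D iv vt \<and>
     (\<forall>d\<in>D. card {d'\<in>D. vt d' = vt d} = Suc r) \<and>
     (\<forall>d\<in>D. vt d = d \<longrightarrow> vt (iv d) = iv d \<longrightarrow> iv d = d) \<and>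
     (\<forall>d\<in>D. vt d \<noteq> d \<longrightarrow> vt (iv d) = iv d \<longrightarrow> h (iv d) < h (vt d)) \<and>
     card {d\<in>D. iv d = d} * VH = PH * card (vt ` D)"

definition enc :: "'d::countable \<Rightarrow> 'd set \<Rightarrow> nat" where
  "enc d A = prod_encode (to_nat d, set_encode (to_nat ` A))"
definition pr :: "nat \<Rightarrow> 'd::countable" where
  "pr n = from_nat (fst (prod_decode n))"
definition al :: "nat \<Rightarrow> 'd::countable set" where
  "al n = from_nat ` set_decode (snd (prod_decode n))"

lemma pr_enc[simp]: "pr (enc d A) = d" unfolding pr_def enc_def by simp
lemma al_enc[simp]: "finite A \<Longrightarrow> al (enc d A) = A" unfolding al_def enc_def by (simp add: image_image)
lemma enc_eq:
  fixes d e :: "'d::countable"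
  shows "finite A \<Longrightarrow> finite B \<Longrightarrow> enc d A = enc e B \<longleftrightarrow> d = e \<and> A = B"
proof
  assume f: "finite A" "finite B" and e: "enc d A = enc e B"
  have "(pr (enc d A) :: 'd) = pr (enc e B)" "(al (enc d A) :: 'd set) = al (enc e B)" using e by simp_all
  then show "d = e \<and> A = B" using f by simp
qed simp

locale cov =
  fixes D :: "'d::countable set" and iv vt :: "'d \<Rightarrow> 'd" and h :: "'d \<Rightarrow> nat" and r m PH VH g :: nat
  assumes inv: "ginv r m PH VH D iv vt h" and gi: "girth_gt g D iv vt"
begin

abbreviation pd :: "nat \<Rightarrow> 'd" where "pd \<equiv> pr"
abbreviation ad :: "nat \<Rightarrow> 'd set" where "ad \<equiv> al"

lemma G: "gwf D iv vt" using inv unfolding ginv_def by auto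
lemma finD: "finite D" using G unfolding gwf_def by auto
lemma ivD: "d \<in> D \<Longrightarrow> iv d \<in> D" using G unfolding gwf_def by auto
lemma ivv: "d \<in> D \<Longrightarrow> iv (iv d) = d" using G unfolding gwf_def by auto
lemma vtD: "d \<in> D \<Longrightarrow> vt d \<in> D" using G unfolding gwf_def by auto
lemma vtvt: "d \<in> D \<Longrightarrow> vt (vt d) = vt d" using G unfolding gwf_def by auto

definition "vol d = (if iv d = d then {} else {d, iv d})"
definition "D' = (\<lambda>(d, A). enc d A) ` (D \<times> Pow D)"
definition "iv' n = enc (iv (pd n)) (sym_diff (ad n) (vol (pd n)))"
definition "vt' n = enc (vt (pd n)) (ad n)"
definition "h' n = h (pd n)"

lemma finPow: "A \<subseteq> D \<Longrightarrow> finite A" using finD finite_subset by blast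

lemma D'_iff: "enc d A \<in> D' \<longleftrightarrow> d \<in> D \<and> A \<subseteq> D" if "A \<subseteq> D \<or> finite A"
proof
  assume "enc d A \<in> D'"
  then obtain d' A' where "d' \<in> D" "A' \<subseteq> D" "enc d A = enc d' A'" unfolding D'_def by auto
  then show "d \<in> D \<and> A \<subseteq> D" using enc_eq[of A A' d d'] finPow that by auto
qed (auto simp: D'_def)

lemma D'E: "n \<in> D' \<Longrightarrow> n = enc (pd n) (ad n) \<and> pd n \<in> D \<and> ad n \<subseteq> D \<and> finite (ad n)"
  unfolding D'_def using finPow by auto
lemma D'E1: "n \<in> D' \<Longrightarrow> n = enc (pd n) (ad n)" using D'E by blast
lemma D'E2: "n \<in> D' \<Longrightarrow> pd n \<in> D" using D'E by blast
lemma D'E3: "n \<in> D' \<Longrightarrow> ad n \<subseteq> D" using D'E by blast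
lemma D'E4: "n \<in> D' \<Longrightarrow> finite (ad n)" using D'E by blast

lemma vol_sub: "d \<in> D \<Longrightarrow> vol d \<subseteq> D" unfolding vol_def using ivD by auto
lemma vol_iv: "d \<in> D \<Longrightarrow> vol (iv d) = vol d" unfolding vol_def using ivv by auto

lemma pr_iv'[simp]: "n \<in> D' \<Longrightarrow> pd (iv' n) = iv (pd n)" unfolding iv'_def by simp
lemma al_iv'[simp]: "n \<in> D' \<Longrightarrow> ad (iv' n) = sym_diff (ad n) (vol (pd n))"
  unfolding iv'_def by (rule al_enc) (use D'E4[of n] in \<open>auto simp: vol_def\<close>)
lemma pr_vt'[simp]: "pd (vt' n) = vt (pd n)" unfolding vt'_def by simp
lemma al_vt'[simp]: "n \<in> D' \<Longrightarrow> ad (vt' n) = ad n" unfolding vt'_def by (rule al_enc) (rule D'E4)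

lemma iv'D: "n \<in> D' \<Longrightarrow> iv' n \<in> D'"
  unfolding iv'_def using D'E[of n] vol_sub[of "pd n"] ivD
  by (subst D'_iff) (auto intro: finPow)
lemma vt'D: "n \<in> D' \<Longrightarrow> vt' n \<in> D'"
  unfolding vt'_def using D'E[of n] vtD by (subst D'_iff) auto

lemma D'_eq: "n \<in> D' \<Longrightarrow> n' \<in> D' \<Longrightarrow> n = n' \<longleftrightarrow> pd n = pd n' \<and> ad n = ad n'"
proof
  assume a: "n \<in> D'" "n' \<in> D'" and e: "pd n = pd n' \<and> ad n = ad n'"
  have "n = enc (pd n) (ad n)" using D'E1[OF a(1)] .
  also have "\<dots> = enc (pd n') (ad n')" using e by simp
  also have "\<dots> = n'" using D'E1[OF a(2)] by simp
  finally show "n = n'" .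
qed simp

lemma iv'iv': "n \<in> D' \<Longrightarrow> iv' (iv' n) = n"
proof -
  assume n: "n \<in> D'"
  have n1: "iv' n \<in> D'" using iv'D[OF n] .
  have p: "pd n \<in> D" using D'E2[OF n] .
  show ?thesis
  proof (subst D'_eq[OF iv'D[OF n1] n], intro conjI)
    show "pd (iv' (iv' n)) = pd n" using n n1 ivv[OF p] by simp
    show "ad (iv' (iv' n)) = ad n" using n n1 vol_iv[OF p] by auto
  qed
qed

lemma gwf': "gwf D' iv' vt'"
  unfolding gwf_def
proof (intro conjI ballI)
  show "finite D'" unfolding D'_def using finD by simp
  fix n assume n: "n \<in> D'"
  show "iv' n \<in> D'" using iv'D[OF n] .
  show "iv' (iv' n) = n" using iv'iv'[OF n] .
  show "vt' n \<in> D'" using vt'D[OF n] .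
  have p: "pd n \<in> D" using D'E2[OF n] .
  show "vt' (vt' n) = vt' n" using D'_eq[OF vt'D[OF vt'D[OF n]] vt'D[OF n]] n vt'D[OF n] vtvt[OF p] by simp
qed

lemma semi'_iff: "n \<in> D' \<Longrightarrow> iv' n = n \<longleftrightarrow> iv (pd n) = pd n"
proof -
  assume n: "n \<in> D'"
  show ?thesis
  proof
    assume "iv' n = n" then show "iv (pd n) = pd n" using pr_iv'[OF n] by metis
  next
    assume a: "iv (pd n) = pd n"
    then have "vol (pd n) = {}" unfolding vol_def by simp
    then show "iv' n = n" using D'_eq[OF iv'D[OF n] n] a n by simp
  qed
qed

lemma out'_iff: "n \<in> D' \<Longrightarrow> vt' n = n \<longleftrightarrow> vt (pd n) = pd n"
proof -
  assume n: "n \<in> D'"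
  show ?thesis
  proof
    assume "vt' n = n" then show "vt (pd n) = pd n" by (metis pr_vt')
  next
    assume "vt (pd n) = pd n"
    then show "vt' n = n" using D'_eq[OF vt'D[OF n] n] n al_vt'[OF n] by simp
  qed
qed


lemma semi_ok': "semi_ok D' iv' vt'"
  unfolding semi_ok_def
proof (intro ballI impI)
  fix n assume n: "n \<in> D'" and s: "iv' n = n"
  have "iv (pd n) = pd n" using semi'_iff[OF n] s by simp
  then have "vt (pd n) = pd n" using inv D'E2[OF n] unfolding ginv_def semi_ok_def by auto
  then show "vt' n = n" using out'_iff[OF n] by simp
qed

lemma deg': "n \<in> D' \<Longrightarrow> card {n'\<in>D'. vt' n' = vt' n} = Suc r"
proof -
  assume n: "n \<in> D'"
  have eq: "{n'\<in>D'. vt' n' = vt' n} = (\<lambda>d. enc d (ad n)) ` {d\<in>D. vt d = vt (pd n)}"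
  proof
    show "{n'\<in>D'. vt' n' = vt' n} \<subseteq> (\<lambda>d. enc d (ad n)) ` {d\<in>D. vt d = vt (pd n)}"
    proof
      fix n' assume "n' \<in> {n'\<in>D'. vt' n' = vt' n}"
      then have n': "n' \<in> D'" "vt' n' = vt' n" by auto
      have "pd (vt' n') = pd (vt' n)" "ad (vt' n') = ad (vt' n)" using n'(2) by metis+
      then have e: "vt (pd n') = vt (pd n)" "ad n' = ad n" using n n'(1) al_vt' pr_vt' by metis+
      have "n' = enc (pd n') (ad n)" using D'E1[OF n'(1)] e by simp
      then show "n' \<in> (\<lambda>d. enc d (ad n)) ` {d\<in>D. vt d = vt (pd n)}" using e D'E2[OF n'(1)] by blast
    qed
    show "(\<lambda>d. enc d (ad n)) ` {d\<in>D. vt d = vt (pd n)} \<subseteq> {n'\<in>D'. vt' n' = vt' n}"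
    proof
      fix x assume "x \<in> (\<lambda>d. enc d (ad n)) ` {d\<in>D. vt d = vt (pd n)}"
      then obtain d where d: "d \<in> D" "vt d = vt (pd n)" "x = enc d (ad n)" by auto
      have fa: "finite (ad n)" "ad n \<subseteq> D" using D'E4[OF n] D'E3[OF n] by auto
      have xD: "x \<in> D'" using d fa D'_iff by auto
      have "vt' x = enc (vt d) (ad n)" unfolding vt'_def using d fa by simp
      also have "\<dots> = vt' n" unfolding vt'_def using d by simp
      finally show "x \<in> {n'\<in>D'. vt' n' = vt' n}" using xD by simp
    qed
  qed
  have inj: "inj_on (\<lambda>d. enc d (ad n)) {d\<in>D. vt d = vt (pd n)}"
    by (rule inj_onI) (use enc_eq D'E4[OF n] in blast)
  have "card {d\<in>D. vt d = vt (pd n)} = Suc r" using inv D'E2[OF n] unfolding ginv_def by auto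
  then show ?thesis unfolding eq using card_image[OF inj] by simp
qed

lemma outs1': "n \<in> D' \<Longrightarrow> vt' n = n \<Longrightarrow> vt' (iv' n) = iv' n \<Longrightarrow> iv' n = n"
proof -
  assume n: "n \<in> D'" and a: "vt' n = n" "vt' (iv' n) = iv' n"
  have "vt (pd n) = pd n" using a out'_iff[OF n] by simp
  moreover have "vt (iv (pd n)) = iv (pd n)" using a out'_iff[OF iv'D[OF n]] n by simp
  ultimately have "iv (pd n) = pd n" using inv D'E2[OF n] unfolding ginv_def by auto
  then show ?thesis using semi'_iff[OF n] by simp
qed

lemma outs2': "n \<in> D' \<Longrightarrow> vt' n \<noteq> n \<Longrightarrow> vt' (iv' n) = iv' n \<Longrightarrow> h' (iv' n) < h' (vt' n)"
proof -
  assume n: "n \<in> D'" and a: "vt' n \<noteq> n" "vt' (iv' n) = iv' n"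
  have "vt (pd n) \<noteq> pd n" using a out'_iff[OF n] by simp
  moreover have "vt (iv (pd n)) = iv (pd n)" using a out'_iff[OF iv'D[OF n]] n by simp
  ultimately have "h (iv (pd n)) < h (vt (pd n))" using inv D'E2[OF n] unfolding ginv_def by auto
  then show ?thesis unfolding h'_def using n by simp
qed

lemma inj_encP: "inj_on (\<lambda>(d, A). enc d A) (X \<times> Pow D)"
  by (rule inj_onI) (auto simp: enc_eq finPow)

lemma ratio': "card {n\<in>D'. iv' n = n} * VH = PH * card (vt' ` D')"
proof -
  have e1: "{n\<in>D'. iv' n = n} = (\<lambda>(d, A). enc d A) ` ({d\<in>D. iv d = d} \<times> Pow D)"
  proof
    show "{n\<in>D'. iv' n = n} \<subseteq> (\<lambda>(d, A). enc d A) ` ({d\<in>D. iv d = d} \<times> Pow D)"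
    proof
      fix n assume "n \<in> {n\<in>D'. iv' n = n}"
      then have n: "n \<in> D'" "iv' n = n" by auto
      have "iv (pd n) = pd n" using semi'_iff[OF n(1)] n(2) by simp
      then show "n \<in> (\<lambda>(d, A). enc d A) ` ({d\<in>D. iv d = d} \<times> Pow D)"
        using D'E1[OF n(1)] D'E2[OF n(1)] D'E3[OF n(1)]
        by (intro image_eqI[of _ _ "(pd n, ad n)"]) auto
    qed
    show "(\<lambda>(d, A). enc d A) ` ({d\<in>D. iv d = d} \<times> Pow D) \<subseteq> {n\<in>D'. iv' n = n}"
    proof
      fix x assume "x \<in> (\<lambda>(d, A). enc d A) ` ({d\<in>D. iv d = d} \<times> Pow D)"
      then obtain d A where dA: "d \<in> D" "iv d = d" "A \<subseteq> D" "x = enc d A" by auto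
      have xD: "x \<in> D'" using dA D'_iff by auto
      have "pd x = d" using dA by simp
      then show "x \<in> {n\<in>D'. iv' n = n}" using semi'_iff[OF xD] dA xD by simp
    qed
  qed
  have e2: "vt' ` D' = (\<lambda>(d, A). enc d A) ` (vt ` D \<times> Pow D)"
  proof
    show "vt' ` D' \<subseteq> (\<lambda>(d, A). enc d A) ` (vt ` D \<times> Pow D)"
    proof
      fix x assume "x \<in> vt' ` D'"
      then obtain n where n: "n \<in> D'" "x = vt' n" by auto
      then show "x \<in> (\<lambda>(d, A). enc d A) ` (vt ` D \<times> Pow D)"
        using D'E2[OF n(1)] D'E3[OF n(1)] unfolding vt'_def
        by (intro image_eqI[of _ _ "(vt (pd n), ad n)"]) auto
    qed
    show "(\<lambda>(d, A). enc d A) ` (vt ` D \<times> Pow D) \<subseteq> vt' ` D'"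
    proof
      fix x assume "x \<in> (\<lambda>(d, A). enc d A) ` (vt ` D \<times> Pow D)"
      then obtain d A where dA: "d \<in> D" "A \<subseteq> D" "x = enc (vt d) A" by auto
      have "enc d A \<in> D'" using dA D'_iff by auto
      moreover have "vt' (enc d A) = x" unfolding vt'_def using dA finPow by simp
      ultimately show "x \<in> vt' ` D'" by (metis image_eqI)
    qed
  qed
  have c1: "card {n\<in>D'. iv' n = n} = card {d\<in>D. iv d = d} * 2 ^ card D"
    unfolding e1 by (subst card_image[OF inj_encP]) (simp add: card_cartesian_product card_Pow finD)
  have c2: "card (vt' ` D') = card (vt ` D) * 2 ^ card D"
    unfolding e2 by (subst card_image[OF inj_encP]) (simp add: card_cartesian_product card_Pow finD)
  have "card {d\<in>D. iv d = d} * VH = PH * card (vt ` D)" using inv unfolding ginv_def by auto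
  then show ?thesis unfolding c1 c2 by (metis mult.assoc mult.commute)
qed

end


context cov begin

lemma step_ad: "n \<in> D' \<Longrightarrow> n' \<in> D' \<Longrightarrow> vt' (iv' n) = vt' n' \<Longrightarrow> ad n' = sym_diff (ad n) (vol (pd n))"
proof -
  assume n: "n \<in> D'" "n' \<in> D'" and e: "vt' (iv' n) = vt' n'"
  have "ad (vt' (iv' n)) = ad (vt' n')" using e by metis
  then show ?thesis using n iv'D[OF n(1)] by simp
qed

lemma step_pd: "n \<in> D' \<Longrightarrow> vt' (iv' n) = vt' n' \<Longrightarrow> vt (iv (pd n)) = vt (pd n')"
proof -
  assume n: "n \<in> D'" and e: "vt' (iv' n) = vt' n'"
  have "pd (vt' (iv' n)) = pd (vt' n')" using e by metis
  then show ?thesis using n by simp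
qed

lemma step_neq: "n \<in> D' \<Longrightarrow> n' \<in> D' \<Longrightarrow> vt' (iv' n) = vt' n' \<Longrightarrow> n' \<noteq> iv' n \<Longrightarrow> pd n' \<noteq> iv (pd n)"
proof
  assume n: "n \<in> D'" "n' \<in> D'" and e: "vt' (iv' n) = vt' n'" and ne: "n' \<noteq> iv' n"
    and p: "pd n' = iv (pd n)"
  have "ad n' = ad (iv' n)" using step_ad[OF n e] n by simp
  moreover have "pd n' = pd (iv' n)" using p n by simp
  ultimately have "n' = iv' n" using D'_eq[OF n(2) iv'D[OF n(1)]] by simp
  then show False using ne by simp
qed

lemma proj_rwalk: "rwalk D' iv' vt' ws \<Longrightarrow> rwalk D iv vt (map pd ws)"
proof -
  assume w: "rwalk D' iv' vt' ws"
  have wD: "ws!i \<in> D'" if "i < length ws" for i using w that unfolding rwalk_def by auto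
  show ?thesis unfolding rwalk_def
  proof (intro conjI allI impI ballI subsetI)
    fix x assume "x \<in> set (map pd ws)"
    then obtain n where n: "n \<in> set ws" "x = pd n" by auto
    have nD: "n \<in> D'" "iv' n \<noteq> n" using w n unfolding rwalk_def by auto
    show "x \<in> D" using D'E2[OF nD(1)] n by simp
    show "iv x \<noteq> x" using semi'_iff[OF nD(1)] nD n by simp
  next
    fix i assume i: "Suc i < length (map pd ws)"
    have s: "vt' (iv' (ws!i)) = vt' (ws!Suc i)" "ws!Suc i \<noteq> iv' (ws!i)" using w i unfolding rwalk_def by auto
    show "vt (iv (map pd ws ! i)) = vt (map pd ws ! Suc i)" using step_pd[OF wD s(1)] i by simp
    show "map pd ws ! Suc i \<noteq> iv (map pd ws ! i)" using step_neq[OF wD wD s] i by simp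
  qed
qed

lemma proj_closed: "rwalk D' iv' vt' ws \<Longrightarrow> closedw iv' vt' ws \<Longrightarrow> closedw iv vt (map pd ws)"
proof -
  assume w: "rwalk D' iv' vt' ws" and c: "closedw iv' vt' ws"
  have ne: "ws \<noteq> []" using c unfolding closedw_def by auto
  have lD: "last ws \<in> D'" "hd ws \<in> D'" using w ne unfolding rwalk_def by auto
  have s: "vt' (iv' (last ws)) = vt' (hd ws)" "hd ws \<noteq> iv' (last ws)" using c unfolding closedw_def by auto
  show ?thesis unfolding closedw_def
    using ne step_pd[OF lD(1) s(1)] step_neq[OF lD(1) lD(2) s] by (simp add: hd_map last_map)
qed

lemma semidist': "semidist m D' iv' vt'"
  unfolding semidist_def
proof (intro allI impI)
  fix ws assume a: "rwalk D' iv' vt' ws \<and> ws \<noteq> [] \<and> iv' (vt' (hd ws)) = vt' (hd ws)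
      \<and> iv' (vt' (iv' (last ws))) = vt' (iv' (last ws))"
  have lD: "last ws \<in> D'" "hd ws \<in> D'" using a unfolding rwalk_def by auto
  have s1: "iv (vt (pd (hd ws))) = vt (pd (hd ws))"
    using semi'_iff[OF vt'D[OF lD(2)]] a by simp
  have s2: "iv (vt (iv (pd (last ws)))) = vt (iv (pd (last ws)))"
    using semi'_iff[OF vt'D[OF iv'D[OF lD(1)]]] a lD by simp
  have "rwalk D iv vt (map pd ws)" using proj_rwalk a by blast
  moreover have "semidist m D iv vt" using inv unfolding ginv_def by auto
  ultimately show "m \<le> length ws" unfolding semidist_def
    using a s1 s2 by (auto simp: hd_map last_map)
qed

lemma symd1: "U \<inter> V = {} \<Longrightarrow> sym_diff (sym_diff A U) V = sym_diff A (U \<union> V)" by auto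
lemma symd2: "sym_diff A U = A \<Longrightarrow> U = {}" by auto

lemma girth': "girth_gt (Suc g) D' iv' vt'"
  unfolding girth_gt_def
proof (intro allI impI)
  fix ws assume a: "rwalk D' iv' vt' ws \<and> closedw iv' vt' ws"
  let ?ps = "map pd ws"
  let ?L = "length ws"
  have prw: "rwalk D iv vt ?ps" using proj_rwalk a by blast
  have pcl: "closedw iv vt ?ps" using proj_closed a by blast
  have gL: "g < ?L" using gi prw pcl unfolding girth_gt_def by auto
  show "Suc g < ?L"
  proof (rule ccontr)
    assume "\<not> Suc g < ?L"
    then have L: "?L = Suc g" using gL by simp
    have wD: "ws!i \<in> D'" if "i < ?L" for i using a that unfolding rwalk_def by auto
    have psD: "?ps!i \<in> D" if "i < ?L" for i using D'E2[OF wD[OF that]] that by simp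
    have ord: "iv (?ps!i) \<noteq> ?ps!i" if "i < ?L" for i using prw that unfolding rwalk_def by auto
    have dist: "edge iv (?ps!i) \<noteq> edge iv (?ps!j)" if ij: "i < j" "j < ?L" for i j
    proof
      assume "edge iv (?ps!i) = edge iv (?ps!j)"
      then obtain ps' where ps': "rwalk D iv vt ps'" "closedw iv vt ps'" "length ps' < length ?ps"
        using shorten[OF ivv prw pcl ij(1)] ij by auto
      have "g < length ps'" using gi ps'(1,2) unfolding girth_gt_def by blast
      then show False using ps'(3) L by simp
    qed
    have volE: "vol (?ps!i) = edge iv (?ps!i)" if "i < ?L" for i
      using ord[OF that] unfolding vol_def edge_def by simp
    have disj: "vol (?ps!i) \<inter> vol (?ps!j) = {}" if "i < j" "j < ?L" for i j
    proof (rule ccontr)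
      assume "vol (?ps!i) \<inter> vol (?ps!j) \<noteq> {}"
      then have "?ps!j = ?ps!i \<or> ?ps!j = iv (?ps!i) \<or> iv (?ps!j) = ?ps!i \<or> iv (?ps!j) = iv (?ps!i)"
        using volE that unfolding edge_def by auto
      moreover have ii: "iv (iv (?ps!i)) = ?ps!i" "iv (iv (?ps!j)) = ?ps!j" using ivv psD that by auto
      ultimately have "?ps!j = ?ps!i \<or> ?ps!j = iv (?ps!i)" by metis
      then have "edge iv (?ps!i) = edge iv (?ps!j)"
        using edge_eq_iff[OF ii] by simp
      then show False using dist that by simp
    qed
    define U where "U k = (\<Union>i<k. vol (?ps!i))" for k
    define A where "A = ad (ws!0)"
    have vstep: "ad (ws!Suc k) = sym_diff (ad (ws!k)) (vol (?ps!k))" if "Suc k < ?L" for k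
      using step_ad[OF wD wD] a that unfolding rwalk_def by auto
    have UA: "ad (ws!k) = sym_diff A (U k)" if "k < ?L" for k
      using that
    proof (induction k)
      case 0 then show ?case unfolding A_def U_def by simp
    next
      case (Suc k)
      have d0: "vol (?ps!i) \<inter> vol (?ps!k) = {}" if "i < k" for i using disj[OF that] Suc.prems by simp
      have d: "U k \<inter> vol (?ps!k) = {}" unfolding U_def using d0 by blast
      have "ad (ws!Suc k) = sym_diff (sym_diff A (U k)) (vol (?ps!k))"
        using vstep[OF Suc.prems] Suc.IH Suc.prems by simp
      also have "\<dots> = sym_diff A (U (Suc k))" using symd1[OF d] unfolding U_def
        by (simp add: lessThan_Suc Un_commute)
      finally show ?case .
    qed
    have ne: "ws \<noteq> []" using a unfolding closedw_def by auto
    have lw: "last ws = ws!(?L - 1)" "hd ws = ws!0" using ne by (simp_all add: last_conv_nth hd_conv_nth)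
    have lD: "last ws \<in> D'" "hd ws \<in> D'" using wD lw ne by auto
    have cl: "vt' (iv' (last ws)) = vt' (hd ws)" using a unfolding closedw_def by auto
    have "ad (hd ws) = sym_diff (ad (last ws)) (vol (pd (last ws)))" using step_ad[OF lD cl] .
    also have "\<dots> = sym_diff (sym_diff A (U (?L - 1))) (vol (?ps!(?L - 1)))"
      using UA[of "?L - 1"] lw ne by simp
    also have "\<dots> = sym_diff A (U ?L)"
    proof -
      have d0: "vol (?ps!i) \<inter> vol (?ps!(?L - 1)) = {}" if "i < ?L - 1" for i using disj[OF that] ne by simp
      have d: "U (?L - 1) \<inter> vol (?ps!(?L - 1)) = {}" unfolding U_def using d0 by blast
      have LL: "?L = Suc (?L - 1)" using ne by simp
      have "U (Suc (?L - 1)) = U (?L - 1) \<union> vol (?ps!(?L - 1))" unfolding U_def lessThan_Suc by auto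
      then have "U (?L - 1) \<union> vol (?ps!(?L - 1)) = U ?L" using LL by metis
      then show ?thesis using symd1[OF d] by simp
    qed
    finally have "sym_diff A (U ?L) = A" using lw unfolding A_def by simp
    then have "U ?L = {}" by (rule symd2)
    moreover have "vol (?ps!0) \<subseteq> U ?L" unfolding U_def using ne by auto
    moreover have "vol (?ps!0) \<noteq> {}" using volE[of 0] ne unfolding edge_def by auto
    ultimately show False by auto
  qed
qed

lemma nonempty': "D' \<noteq> {}"
proof -
  obtain d where "d \<in> D" using inv unfolding ginv_def by auto
  then have "enc d {} \<in> D'" using D'_iff by auto
  then show ?thesis by auto
qed

lemma cover_result: "ginv r m PH VH D' iv' vt' h' \<and> girth_gt (Suc g) D' iv' vt'"
  unfolding ginv_def
  using nonempty' gwf' semi_ok' semidist' deg' outs1' outs2' ratio' girth' by blast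

end

lemma cover_step:
  fixes D :: "'d::countable set"
  assumes "ginv r m PH VH D iv vt h" "girth_gt g D iv vt"
  shows "\<exists>(D'::nat set) iv' vt' h'. ginv r m PH VH D' iv' vt' h' \<and> girth_gt (Suc g) D' iv' vt'"
proof -
  interpret cov D iv vt h r m PH VH g using assms by unfold_locales
  show ?thesis using cover_result by blast
qed

lemma cover_iter:
  fixes D :: "'d::countable set"
  assumes "ginv r m PH VH D iv vt h"
  shows "\<exists>(D'::nat set) iv' vt' h'. ginv r m PH VH D' iv' vt' h' \<and> girth_gt (Suc g) D' iv' vt'"
proof (induction g)
  case 0
  have "girth_gt 0 D iv vt" unfolding girth_gt_def closedw_def by auto
  then show ?case using cover_step[OF assms] by blast
next
  case (Suc g)
  then obtain D' :: "nat set" and iv' vt' h' where "ginv r m PH VH D' iv' vt' h'" "girth_gt (Suc g) D' iv' vt'"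
    by blast
  then show ?case using cover_step by blast
qed


lemma depth_walk:
  fixes dep :: "'d \<Rightarrow> nat"
  assumes rw: "rwalk D iv vt ws" and ne: "ws \<noteq> []"
    and dvt: "\<And>d. d \<in> D \<Longrightarrow> dep (vt d) = dep d"
    and ivD: "\<And>d. d \<in> D \<Longrightarrow> iv d \<in> D"
    and F1: "\<And>d. d \<in> D \<Longrightarrow> iv d \<noteq> d \<Longrightarrow> dep d \<le> Suc (dep (iv d))"
    and FC: "\<And>d d'. d \<in> D \<Longrightarrow> d' \<in> D \<Longrightarrow> iv d \<noteq> d \<Longrightarrow> dep (iv d) = Suc (dep d) \<Longrightarrow> dep (iv d) < s
        \<Longrightarrow> vt d' = vt (iv d) \<Longrightarrow> d' \<noteq> iv d \<Longrightarrow> dep (iv d') = Suc (dep d')"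
    and F0: "\<And>d. d \<in> D \<Longrightarrow> iv d \<noteq> d \<Longrightarrow> dep d = 0 \<Longrightarrow> 0 < s \<Longrightarrow> dep (iv d) = 1"
    and st: "dep (hd ws) = 0" and en: "dep (iv (last ws)) = 0"
  shows "2 * s \<le> length ws"
    and "(\<And>d d'. d \<in> D \<Longrightarrow> d' \<in> D \<Longrightarrow> iv d \<noteq> d \<Longrightarrow> dep (iv d) = Suc (dep d) \<Longrightarrow> dep (iv d) = s
        \<Longrightarrow> vt d' = vt (iv d) \<Longrightarrow> d' \<noteq> iv d \<Longrightarrow> dep (iv d') = dep d') \<Longrightarrow>
        (\<And>d. d \<in> D \<Longrightarrow> iv d \<noteq> d \<Longrightarrow> dep d = 0 \<Longrightarrow> s = 0 \<Longrightarrow> dep (iv d) = 0) \<Longrightarrow>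
        Suc (2 * s) \<le> length ws"
proof -
  let ?L = "length ws"
  have wD: "ws!i \<in> D" "iv (ws!i) \<noteq> ws!i" if "i < ?L" for i using rw that unfolding rwalk_def by auto
  have wS: "vt (iv (ws!i)) = vt (ws!Suc i)" "ws!Suc i \<noteq> iv (ws!i)" if "Suc i < ?L" for i
    using rw that unfolding rwalk_def by auto
  have arr: "dep (iv (ws!i)) = dep (ws!Suc i)" if "Suc i < ?L" for i
    using dvt[OF ivD[OF wD(1)]] dvt[OF wD(1)] wS(1) that by (metis Suc_lessD)
  have st0: "dep (ws!0) = 0" using st ne by (simp add: hd_conv_nth)
  have en0: "dep (iv (ws!(?L - 1))) = 0" using en ne by (simp add: last_conv_nth)
  define a where "a i = (if i = 0 then dep (ws!0) else dep (iv (ws!(i - 1))))" for i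
  have aL: "a ?L = 0" using en0 ne unfolding a_def by auto
  have astep: "a i \<le> Suc (a (Suc i))" if "i < ?L" for i
  proof (cases i)
    case 0
    have "dep (ws!0) \<le> Suc (dep (iv (ws!0)))" using F1 wD[of 0] that 0 by auto
    then show ?thesis unfolding a_def using 0 by simp
  next
    case (Suc i')
    have "dep (iv (ws!i')) = dep (ws!i)" using arr[of i'] that Suc by simp
    moreover have "dep (ws!i) \<le> Suc (dep (iv (ws!i)))" using F1 wD[of i] that by auto
    ultimately show ?thesis unfolding a_def using Suc by simp
  qed
  have adesc: "a (?L - k) \<le> k" if "k \<le> ?L" for k
    using that
  proof (induction k)
    case 0 then show ?case using aL by simp
  next
    case (Suc k)
    have "a (?L - Suc k) \<le> Suc (a (Suc (?L - Suc k)))" using astep[of "?L - Suc k"] Suc.prems by simp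
    moreover have "Suc (?L - Suc k) = ?L - k" using Suc.prems by simp
    ultimately show ?case using Suc by simp
  qed
  have abound: "a i + i \<le> ?L" if "i \<le> ?L" for i using adesc[of "?L - i"] that by simp
  have down: "dep (ws!i) = i \<and> dep (iv (ws!i)) = Suc i" if "i < ?L" "i < s" for i
    using that
  proof (induction i)
    case 0 then show ?case using st0 F0[OF wD[of 0]] by simp
  next
    case (Suc i)
    have IH: "dep (ws!i) = i" "dep (iv (ws!i)) = Suc i" using Suc by auto
    have d1: "dep (ws!Suc i) = Suc i" using arr[of i] IH Suc.prems by simp
    have "dep (iv (ws!Suc i)) = Suc (dep (ws!Suc i))"
      using FC[OF wD(1)[of i] wD(1)[of "Suc i"] wD(2)[of i]] IH wS[of i] Suc.prems by simp
    then show ?case using d1 by simp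
  qed
  have Ls: "s \<le> ?L"
  proof (rule ccontr)
    assume "\<not> s \<le> ?L"
    then have "?L - 1 < s" "?L - 1 < ?L" using ne by auto
    then have "dep (iv (ws!(?L - 1))) = ?L" using down[of "?L - 1"] ne by simp
    then show False using en0 ne by simp
  qed
  show "2 * s \<le> ?L"
  proof (cases s)
    case 0 then show ?thesis by simp
  next
    case (Suc s')
    have "a s = s" unfolding a_def using down[of s'] Suc Ls by (cases "s' < ?L") auto
    then show ?thesis using abound[OF Ls] by simp
  qed
  assume FL: "\<And>d d'. d \<in> D \<Longrightarrow> d' \<in> D \<Longrightarrow> iv d \<noteq> d \<Longrightarrow> dep (iv d) = Suc (dep d) \<Longrightarrow> dep (iv d) = s
        \<Longrightarrow> vt d' = vt (iv d) \<Longrightarrow> d' \<noteq> iv d \<Longrightarrow> dep (iv d') = dep d'"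
    and F00: "\<And>d. d \<in> D \<Longrightarrow> iv d \<noteq> d \<Longrightarrow> dep d = 0 \<Longrightarrow> s = 0 \<Longrightarrow> dep (iv d) = 0"
  have Ls1: "s < ?L"
  proof (cases s)
    case 0 then show ?thesis using ne by simp
  next
    case (Suc s')
    show ?thesis
    proof (rule ccontr)
      assume "\<not> s < ?L"
      then have "?L = s" using Ls by simp
      then have "dep (iv (ws!(?L - 1))) = ?L" using down[of "?L - 1"] ne Suc by simp
      then show False using en0 ne by simp
    qed
  qed
  have as: "a (Suc s) = s"
  proof (cases s)
    case 0
    then show ?thesis unfolding a_def using F00[OF wD[of 0]] st0 ne by simp
  next
    case (Suc s')
    have dn: "dep (ws!s') = s'" "dep (iv (ws!s')) = s" using down[of s'] Suc Ls1 by auto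
    have ds: "dep (ws!s) = s" using arr[of s'] dn Suc Ls1 by simp
    have "dep (iv (ws!s)) = dep (ws!s)"
      using FL[OF wD(1)[of s'] wD(1)[of s] wD(2)[of s']] dn wS[of s'] Suc Ls1 by simp
    then show ?thesis unfolding a_def using ds by simp
  qed
  show "Suc (2 * s) \<le> ?L" using abound[of "Suc s"] Ls1 as by simp
qed


definition LL :: "nat \<Rightarrow> nat \<Rightarrow> nat list set" where
  "LL r k = {u. set u \<subseteq> {0..<r} \<and> length u \<le> k}"

definition DE :: "nat \<Rightarrow> nat \<Rightarrow> (nat \<times> nat list \<times> nat) set" where
  "DE r s = {(b, u, j). b < 2 \<and> u \<in> LL r s \<and> j \<le> r}"

fun ivE :: "nat \<Rightarrow> nat \<times> nat list \<times> nat \<Rightarrow> nat \<times> nat list \<times> nat" where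
  "ivE s (b, [], 0) = (b, [], 0)"
| "ivE s (b, c # u, 0) = (b, u, Suc c)"
| "ivE s (b, u, Suc j) = (if length u < s then (b, j # u, 0) else (1 - b, u, Suc j))"

fun vtE :: "nat \<times> nat list \<times> nat \<Rightarrow> nat \<times> nat list \<times> nat" where
  "vtE (b, u, j) = (b, u, 0)"

fun hE :: "nat \<Rightarrow> nat \<times> nat list \<times> nat \<Rightarrow> nat" where
  "hE s (b, u, j) = s - length u"

fun depE :: "nat \<times> nat list \<times> nat \<Rightarrow> nat" where
  "depE (b, u, j) = length u"

lemma finite_LL: "finite (LL r k)"
proof -
  have "LL r k \<subseteq> {u. set u \<subseteq> {0..<r} \<and> length u \<le> k}" unfolding LL_def by simp
  then show ?thesis using finite_lists_length_le[of "{0..<r}" k] unfolding LL_def by simp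
qed

lemma finite_DE: "finite (DE r s)"
proof -
  have "DE r s \<subseteq> {0..<2} \<times> LL r s \<times> {0..r}" unfolding DE_def by auto
  then show ?thesis using finite_LL finite_subset by blast
qed

lemma DE_mem: "(b, u, j) \<in> DE r s \<longleftrightarrow> b < 2 \<and> set u \<subseteq> {0..<r} \<and> length u \<le> s \<and> j \<le> r"
  unfolding DE_def LL_def by auto

lemma ivE_D: "d \<in> DE r s \<Longrightarrow> ivE s d \<in> DE r s"
  by (cases "(s, d)" rule: ivE.cases) (auto simp: DE_mem)

lemma ivE_ivE: "d \<in> DE r s \<Longrightarrow> ivE s (ivE s d) = d"
  by (cases "(s, d)" rule: ivE.cases) (auto simp: DE_mem)

lemma gwfE: "gwf (DE r s) (ivE s) vtE"
  unfolding gwf_def using finite_DE ivE_D ivE_ivE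
  by (auto simp: DE_mem)


lemma one_minus_neq[simp]: "(Suc 0 - b = b) = False" for b :: nat by arith

lemma ivE_fix: "ivE s d = d \<longleftrightarrow> (\<exists>b. d = (b, [], 0))"
  by (cases "(s, d)" rule: ivE.cases) auto

lemma semiE: "semi_ok (DE r s) (ivE s) vtE"
  unfolding semi_ok_def using ivE_fix by auto

lemma degE: "d \<in> DE r s \<Longrightarrow> card {d'\<in>DE r s. vtE d' = vtE d} = Suc r"
proof -
  assume d: "d \<in> DE r s"
  obtain b u j where bu: "d = (b, u, j)" by (cases d) auto
  have "{d'\<in>DE r s. vtE d' = vtE d} = (\<lambda>j. (b, u, j)) ` {0..r}"
    using d unfolding bu by (auto simp: DE_mem)
  moreover have "inj_on (\<lambda>j. (b, u, j)) {0..r}" by (auto simp: inj_on_def)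
  ultimately show ?thesis by (simp add: card_image)
qed

lemma outs1E: "d \<in> DE r s \<Longrightarrow> vtE d = d \<Longrightarrow> vtE (ivE s d) = ivE s d \<Longrightarrow> ivE s d = d"
  by (cases "(s, d)" rule: ivE.cases) auto

lemma outs2E: "d \<in> DE r s \<Longrightarrow> vtE d \<noteq> d \<Longrightarrow> vtE (ivE s d) = ivE s d \<Longrightarrow> hE s (ivE s d) < hE s (vtE d)"
  by (cases "(s, d)" rule: ivE.cases) (auto split: if_splits)

lemma dvtE: "d \<in> DE r s \<Longrightarrow> depE (vtE d) = depE d" by (cases d) auto

lemma F1E: "d \<in> DE r s \<Longrightarrow> ivE s d \<noteq> d \<Longrightarrow> depE d \<le> Suc (depE (ivE s d))"
  by (cases "(s, d)" rule: ivE.cases) auto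

lemma FCE: "d \<in> DE r s \<Longrightarrow> d' \<in> DE r s \<Longrightarrow> ivE s d \<noteq> d \<Longrightarrow> depE (ivE s d) = Suc (depE d) \<Longrightarrow> depE (ivE s d) < s
        \<Longrightarrow> vtE d' = vtE (ivE s d) \<Longrightarrow> d' \<noteq> ivE s d \<Longrightarrow> depE (ivE s d') = Suc (depE d')"
proof -
  assume d: "d \<in> DE r s" and d': "d' \<in> DE r s" and nf: "ivE s d \<noteq> d" and up: "depE (ivE s d) = Suc (depE d)"
    and lt: "depE (ivE s d) < s" and v: "vtE d' = vtE (ivE s d)" and ne: "d' \<noteq> ivE s d"
  obtain b u j where bu: "d = (b, u, j)" by (cases d) auto
  obtain j0 where j0: "j = Suc j0" "length u < s"
  proof (cases j)
    case 0
    then show ?thesis using up unfolding bu by (cases u) auto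
  next
    case (Suc j0)
    show ?thesis
    proof (cases "length u < s")
      case True then show ?thesis using that Suc by auto
    next
      case False then show ?thesis using up unfolding bu Suc by simp
    qed
  qed
  have ivd: "ivE s d = (b, j0 # u, 0)" using j0 bu by simp
  obtain b' u' j' where bu': "d' = (b', u', j')" by (cases d') auto
  have e: "b' = b" "u' = j0 # u" using v ivd bu' by auto
  obtain j1 where j1: "j' = Suc j1" using ne ivd bu' e by (cases j') auto
  have "length u' < s" using lt ivd e by simp
  then show ?thesis unfolding bu' j1 using e by simp
qed

lemma FLE: "d \<in> DE r s \<Longrightarrow> d' \<in> DE r s \<Longrightarrow> ivE s d \<noteq> d \<Longrightarrow> depE (ivE s d) = Suc (depE d) \<Longrightarrow> depE (ivE s d) = s
        \<Longrightarrow> vtE d' = vtE (ivE s d) \<Longrightarrow> d' \<noteq> ivE s d \<Longrightarrow> depE (ivE s d') = depE d'"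
proof -
  assume d: "d \<in> DE r s" and d': "d' \<in> DE r s" and nf: "ivE s d \<noteq> d" and up: "depE (ivE s d) = Suc (depE d)"
    and lt: "depE (ivE s d) = s" and v: "vtE d' = vtE (ivE s d)" and ne: "d' \<noteq> ivE s d"
  obtain b u j where bu: "d = (b, u, j)" by (cases d) auto
  obtain j0 where j0: "j = Suc j0" "length u < s"
  proof (cases j)
    case 0
    then show ?thesis using up unfolding bu by (cases u) auto
  next
    case (Suc j0)
    show ?thesis
    proof (cases "length u < s")
      case True then show ?thesis using that Suc by auto
    next
      case False then show ?thesis using up unfolding bu Suc by simp
    qed
  qed
  have ivd: "ivE s d = (b, j0 # u, 0)" using j0 bu by simp
  obtain b' u' j' where bu': "d' = (b', u', j')" by (cases d') auto
  have e: "b' = b" "u' = j0 # u" using v ivd bu' by auto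
  obtain j1 where j1: "j' = Suc j1" using ne ivd bu' e by (cases j') auto
  have "length u' = s" using lt ivd e by simp
  then show ?thesis unfolding bu' j1 using e by simp
qed

lemma F0E: "d \<in> DE r s \<Longrightarrow> ivE s d \<noteq> d \<Longrightarrow> depE d = 0 \<Longrightarrow> 0 < s \<Longrightarrow> depE (ivE s d) = 1"
  by (cases "(s, d)" rule: ivE.cases) auto

lemma F00E: "d \<in> DE r s \<Longrightarrow> ivE s d \<noteq> d \<Longrightarrow> depE d = 0 \<Longrightarrow> s = 0 \<Longrightarrow> depE (ivE s d) = 0"
  by (cases "(s, d)" rule: ivE.cases) auto

lemma semivE: "ivE s (vtE d) = vtE d \<Longrightarrow> depE d = 0"
  using ivE_fix[of s "vtE d"] by (cases d) auto

lemma semidistE: "semidist (Suc (2 * s)) (DE r s) (ivE s) vtE"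
  unfolding semidist_def
proof (intro allI impI)
  fix ws assume a: "rwalk (DE r s) (ivE s) vtE ws \<and> ws \<noteq> [] \<and> ivE s (vtE (hd ws)) = vtE (hd ws) \<and>
      ivE s (vtE (ivE s (last ws))) = vtE (ivE s (last ws))"
  have st: "depE (hd ws) = 0" by (rule semivE[of s]) (use a in simp)
  have en: "depE (ivE s (last ws)) = 0" by (rule semivE[of s]) (use a in simp)
  show "Suc (2 * s) \<le> length ws"
  proof -
    have rw: "rwalk (DE r s) (ivE s) vtE ws" and ne: "ws \<noteq> []" using a by auto
    show ?thesis
      apply (rule depth_walk(2)[where dep=depE and D="DE r s" and iv="ivE s" and vt=vtE and s=s])
                apply (rule rw)
               apply (rule ne)
              apply (erule dvtE)
             apply (erule ivE_D)
            apply (erule (1) F1E)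
           apply (erule (6) FCE)
          apply (erule (3) F0E)
         apply (rule st)
        apply (rule en)
       apply (erule (6) FLE)
      apply (erule (3) F00E)
      done
  qed
qed

lemma DE_ne[simp]: "DE r s \<noteq> {}"
proof -
  have "(0, [], 0) \<in> DE r s" by (simp add: DE_mem)
  then show ?thesis by auto
qed

lemma ginvE: "ginv r (Suc (2 * s)) (card {d\<in>DE r s. ivE s d = d}) (card (vtE ` DE r s)) (DE r s) (ivE s) vtE (hE s)"
  unfolding ginv_def
  by (intro conjI ballI impI gwfE semiE semidistE degE outs1E outs2E) (simp_all add: mult.commute)


lemma card_lists_le: "card {u. set u \<subseteq> {0..<r} \<and> length u \<le> k} = (\<Sum>i\<le>k. r ^ i)"
proof (induction k)
  case 0
  have "{u. set u \<subseteq> {0..<r} \<and> length u \<le> 0} = {[]}" by auto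
  then show ?case by simp
next
  case (Suc k)
  have e: "{u. set u \<subseteq> {0..<r} \<and> length u \<le> Suc k} =
     {u. set u \<subseteq> {0..<r} \<and> length u \<le> k} \<union> {u. set u \<subseteq> {0..<r} \<and> length u = Suc k}" by auto
  have f1: "finite {u. set u \<subseteq> {0..<r} \<and> length u \<le> k}" using finite_lists_length_le[of "{0..<r}" k] by simp
  have f2: "finite {u. set u \<subseteq> {0..<r} \<and> length u = Suc k}" using finite_lists_length_eq[of "{0..<r}" "Suc k"] by simp
  have "card {u. set u \<subseteq> {0..<r} \<and> length u \<le> Suc k} =
     card {u. set u \<subseteq> {0..<r} \<and> length u \<le> k} + card {u. set u \<subseteq> {0..<r} \<and> length u = Suc k}"
    unfolding e by (rule card_Un_disjoint[OF f1 f2]) auto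
  also have "\<dots> = (\<Sum>i\<le>k. r ^ i) + r ^ Suc k" using Suc card_lists_length_eq[of "{0..<r}" "Suc k"] by simp
  finally show ?case by simp
qed

lemma card_semiE: "card {d\<in>DE r s. ivE s d = d} = 2"
proof -
  have "{d\<in>DE r s. ivE s d = d} = (\<lambda>b. (b, [], 0)) ` {0..<2}"
    using ivE_fix[of s] by (auto simp: DE_mem)
  moreover have "inj_on (\<lambda>b::nat. (b, []::nat list, 0::nat)) {0..<2}" by (auto simp: inj_on_def)
  ultimately show ?thesis by (simp add: card_image)
qed

lemma card_vertE: "card (vtE ` DE r s) = 2 * (\<Sum>i\<le>s. r ^ i)"
proof -
  have "vtE ` DE r s = (\<lambda>(b, u). (b, u, 0)) ` ({0..<2} \<times> LL r s)"
  proof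
    show "vtE ` DE r s \<subseteq> (\<lambda>(b, u). (b, u, 0)) ` ({0..<2} \<times> LL r s)"
    proof
      fix x assume "x \<in> vtE ` DE r s"
      then obtain b u j where bu: "b < 2" "u \<in> LL r s" "x = (b, u, 0)" by (auto simp: DE_def)
      then show "x \<in> (\<lambda>(b, u). (b, u, 0)) ` ({0..<2} \<times> LL r s)"
        by (intro image_eqI[of _ _ "(b, u)"]) auto
    qed
    show "(\<lambda>(b, u). (b, u, 0)) ` ({0..<2} \<times> LL r s) \<subseteq> vtE ` DE r s"
    proof
      fix x assume "x \<in> (\<lambda>(b, u). (b, u, 0::nat)) ` ({0..<2::nat} \<times> LL r s)"
      then obtain b u where bu: "b < (2::nat)" "u \<in> LL r s" "x = (b, u, 0::nat)" by auto
      then have "(b, u, 0::nat) \<in> DE r s" unfolding DE_def by auto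
      moreover have "vtE (b, u, 0::nat) = x" using bu by simp
      ultimately show "x \<in> vtE ` DE r s" by (metis image_eqI)
    qed
  qed
  moreover have "inj_on (\<lambda>(b, u). (b::nat, u::nat list, 0::nat)) ({0..<2} \<times> LL r s)" by (auto simp: inj_on_def)
  ultimately have "card (vtE ` DE r s) = card ({0..<2::nat} \<times> LL r s)" by (simp add: card_image)
  also have "\<dots> = 2 * card (LL r s)" by (simp add: card_cartesian_product)
  finally show ?thesis using card_lists_le unfolding LL_def by simp
qed


definition DO :: "nat \<Rightarrow> nat \<Rightarrow> (nat \<times> nat list \<times> nat) set" where
  "DO r s = {(b, u, j). b \<le> r \<and> set u \<subseteq> {0..<r} \<and> length u < s \<and> j \<le> r} \<union>
            {(b, u, j). b \<le> r \<and> set u \<subseteq> {0..<r} \<and> length u = s \<and> j = 0}"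

fun ivO :: "nat \<times> nat list \<times> nat \<Rightarrow> nat \<times> nat list \<times> nat" where
  "ivO (b, [], 0) = (b, [], 0)"
| "ivO (b, c # u, 0) = (b, u, Suc c)"
| "ivO (b, u, Suc j) = (b, j # u, 0)"

fun vtO :: "nat \<Rightarrow> nat \<times> nat list \<times> nat \<Rightarrow> nat \<times> nat list \<times> nat" where
  "vtO s (b, u, j) = (if length u = s then (0, u, 0) else (b, u, 0))"

fun hO :: "nat \<Rightarrow> nat \<times> nat list \<times> nat \<Rightarrow> nat" where
  "hO s (b, u, j) = s - length u"

lemma DO_mem: "(b, u, j) \<in> DO r s \<longleftrightarrow> b \<le> r \<and> set u \<subseteq> {0..<r} \<and>
   ((length u < s \<and> j \<le> r) \<or> (length u = s \<and> j = 0))"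
  unfolding DO_def by auto

lemma finite_DO: "finite (DO r s)"
proof -
  have "DO r s \<subseteq> {0..r} \<times> LL r s \<times> {0..r}" unfolding DO_def LL_def by auto
  then show ?thesis using finite_LL finite_subset by blast
qed

context fixes r s :: nat assumes s1: "1 \<le> s"
begin

lemma ivO_D: "d \<in> DO r s \<Longrightarrow> ivO d \<in> DO r s"
  by (cases d rule: ivO.cases) (auto simp: DO_mem)

lemma ivO_ivO: "d \<in> DO r s \<Longrightarrow> ivO (ivO d) = d"
  by (cases d rule: ivO.cases) (auto simp: DO_mem)

lemma gwfO: "gwf (DO r s) ivO (vtO s)"
  unfolding gwf_def using finite_DO ivO_D ivO_ivO by (auto simp: DO_mem)

lemma ivO_fix: "ivO d = d \<longleftrightarrow> (\<exists>b. d = (b, [], 0))"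
  by (cases d rule: ivO.cases) auto

lemma semiO: "semi_ok (DO r s) ivO (vtO s)"
  unfolding semi_ok_def using ivO_fix s1 by auto

lemma degO: "d \<in> DO r s \<Longrightarrow> card {d'\<in>DO r s. vtO s d' = vtO s d} = Suc r"
proof -
  assume d: "d \<in> DO r s"
  obtain b u j where bu: "d = (b, u, j)" by (cases d) auto
  show ?thesis
  proof (cases "length u = s")
    case True
    have "{d'\<in>DO r s. vtO s d' = vtO s d} = (\<lambda>b. (b, u, 0)) ` {0..r}"
      using d True unfolding bu by (auto simp: DO_mem split: if_splits)
    moreover have "inj_on (\<lambda>b. (b, u, 0::nat)) {0..r}" by (auto simp: inj_on_def)
    ultimately show ?thesis by (simp add: card_image)
  next
    case False
    have "{d'\<in>DO r s. vtO s d' = vtO s d} = (\<lambda>j. (b, u, j)) ` {0..r}"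
      using d False unfolding bu by (auto simp: DO_mem split: if_splits)
    moreover have "inj_on (\<lambda>j. (b, u, j)) {0..r}" by (auto simp: inj_on_def)
    ultimately show ?thesis by (simp add: card_image)
  qed
qed

lemma outs1O: "d \<in> DO r s \<Longrightarrow> vtO s d = d \<Longrightarrow> vtO s (ivO d) = ivO d \<Longrightarrow> ivO d = d"
  by (cases d rule: ivO.cases) (auto split: if_splits)

lemma outs2O: "d \<in> DO r s \<Longrightarrow> vtO s d \<noteq> d \<Longrightarrow> vtO s (ivO d) = ivO d \<Longrightarrow> hO s (ivO d) < hO s (vtO s d)"
  by (cases d rule: ivO.cases) (auto simp: DO_mem split: if_splits)

lemma dvtO: "d \<in> DO r s \<Longrightarrow> depE (vtO s d) = depE d" by (cases d) auto

lemma F1O: "d \<in> DO r s \<Longrightarrow> ivO d \<noteq> d \<Longrightarrow> depE d \<le> Suc (depE (ivO d))"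
  by (cases d rule: ivO.cases) auto

lemma FCO: "d \<in> DO r s \<Longrightarrow> d' \<in> DO r s \<Longrightarrow> ivO d \<noteq> d \<Longrightarrow> depE (ivO d) = Suc (depE d) \<Longrightarrow> depE (ivO d) < s
        \<Longrightarrow> vtO s d' = vtO s (ivO d) \<Longrightarrow> d' \<noteq> ivO d \<Longrightarrow> depE (ivO d') = Suc (depE d')"
proof -
  assume d: "d \<in> DO r s" and d': "d' \<in> DO r s" and nf: "ivO d \<noteq> d" and up: "depE (ivO d) = Suc (depE d)"
    and lt: "depE (ivO d) < s" and v: "vtO s d' = vtO s (ivO d)" and ne: "d' \<noteq> ivO d"
  obtain b u j where bu: "d = (b, u, j)" by (cases d) auto
  obtain j0 where j0: "j = Suc j0"
  proof (cases j)
    case 0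
    then show ?thesis using up unfolding bu by (cases u) auto
  next
    case (Suc j0) then show ?thesis using that by auto
  qed
  have ivd: "ivO d = (b, j0 # u, 0)" using j0 bu by simp
  have ls: "length (j0 # u) < s" using lt ivd by simp
  obtain b' u' j' where bu': "d' = (b', u', j')" by (cases d') auto
  have e: "b' = b" "u' = j0 # u" using v ivd bu' ls by (auto split: if_splits)
  obtain j1 where j1: "j' = Suc j1" using ne ivd bu' e by (cases j') auto
  show ?thesis unfolding bu' j1 using e by simp
qed

lemma F0O: "d \<in> DO r s \<Longrightarrow> ivO d \<noteq> d \<Longrightarrow> depE d = 0 \<Longrightarrow> 0 < s \<Longrightarrow> depE (ivO d) = 1"
  by (cases d rule: ivO.cases) auto

lemma semivO: "ivO (vtO s d) = vtO s d \<Longrightarrow> depE d = 0"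
  using ivO_fix[of "vtO s d"] by (cases d) (auto split: if_splits)

lemma semidistO: "semidist (2 * s) (DO r s) ivO (vtO s)"
  unfolding semidist_def
proof (intro allI impI)
  fix ws assume a: "rwalk (DO r s) ivO (vtO s) ws \<and> ws \<noteq> [] \<and> ivO (vtO s (hd ws)) = vtO s (hd ws) \<and>
      ivO (vtO s (ivO (last ws))) = vtO s (ivO (last ws))"
  have st: "depE (hd ws) = 0" by (rule semivO) (use a in simp)
  have en: "depE (ivO (last ws)) = 0" by (rule semivO) (use a in simp)
  have rw: "rwalk (DO r s) ivO (vtO s) ws" and ne: "ws \<noteq> []" using a by auto
  show "2 * s \<le> length ws"
    apply (rule depth_walk(1)[where dep=depE and D="DO r s" and iv=ivO and vt="vtO s" and s=s])
            apply (rule rw)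
           apply (rule ne)
          apply (erule dvtO)
         apply (erule ivO_D)
        apply (erule (1) F1O)
       apply (erule (6) FCO)
      apply (erule (3) F0O)
     apply (rule st)
    apply (rule en)
    done
qed

lemma DO_ne[simp]: "DO r s \<noteq> {}"
proof -
  have "(0, [], 0) \<in> DO r s" using s1 by (simp add: DO_mem)
  then show ?thesis by auto
qed

lemma ginvO: "ginv r (2 * s) (card {d\<in>DO r s. ivO d = d}) (card (vtO s ` DO r s)) (DO r s) ivO (vtO s) (hO s)"
  unfolding ginv_def
  by (intro conjI ballI impI gwfO semiO semidistO degO outs1O outs2O) (simp_all add: mult.commute)

lemma card_semiO: "card {d\<in>DO r s. ivO d = d} = Suc r"
proof -
  have "{d\<in>DO r s. ivO d = d} = (\<lambda>b. (b, [], 0)) ` {0..r}"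
    using ivO_fix s1 by (auto simp: DO_mem)
  moreover have "inj_on (\<lambda>b::nat. (b, []::nat list, 0::nat)) {0..r}" by (auto simp: inj_on_def)
  ultimately show ?thesis by (simp add: card_image)
qed

lemma card_vertO: "card (vtO s ` DO r s) = Suc r * (\<Sum>i\<le>s - 1. r ^ i) + r ^ s"
proof -
  define T where "T = {u. set u \<subseteq> {0..<r} \<and> length u \<le> s - 1}"
  define Y where "Y = {u. set u \<subseteq> {0..<r} \<and> length u = s}"
  have e: "vtO s ` DO r s = (\<lambda>(b, u). (b, u, 0)) ` ({0..r} \<times> T) \<union> (\<lambda>u. (0, u, 0)) ` Y"
  proof
    show "vtO s ` DO r s \<subseteq> (\<lambda>(b, u). (b, u, 0)) ` ({0..r} \<times> T) \<union> (\<lambda>u. (0, u, 0)) ` Y"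
    proof
      fix x assume "x \<in> vtO s ` DO r s"
      then obtain b u j where bu: "(b, u, j) \<in> DO r s" "x = vtO s (b, u, j)" by auto
      show "x \<in> (\<lambda>(b, u). (b, u, 0)) ` ({0..r} \<times> T) \<union> (\<lambda>u. (0, u, 0)) ` Y"
      proof (cases "length u = s")
        case True then show ?thesis using bu unfolding Y_def by (auto simp: DO_mem)
      next
        case False
        then have "(b, u) \<in> {0..r} \<times> T" using bu s1 unfolding T_def by (auto simp: DO_mem)
        then show ?thesis using bu False by (auto intro!: image_eqI[of _ _ "(b, u)"])
      qed
    qed
    show "(\<lambda>(b, u). (b, u, 0)) ` ({0..r} \<times> T) \<union> (\<lambda>u. (0, u, 0)) ` Y \<subseteq> vtO s ` DO r s"
    proof
      fix x assume "x \<in> (\<lambda>(b, u). (b, u, 0::nat)) ` ({0..r} \<times> T) \<union> (\<lambda>u. (0::nat, u, 0::nat)) ` Y"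
      then consider (a) b u where "b \<le> r" "u \<in> T" "x = (b, u, 0::nat)" | (c) u where "u \<in> Y" "x = (0::nat, u, 0::nat)"
        by auto
      then show "x \<in> vtO s ` DO r s"
      proof cases
        case a
        then have "(b, u, 0) \<in> DO r s" "vtO s (b, u, 0) = x" using s1 unfolding T_def by (auto simp: DO_mem)
        then show ?thesis by (metis image_eqI)
      next
        case c
        then have "(0, u, 0) \<in> DO r s" "vtO s (0, u, 0) = x" unfolding Y_def by (auto simp: DO_mem)
        then show ?thesis by (metis image_eqI)
      qed
    qed
  qed
  have fT: "finite T" unfolding T_def using finite_lists_length_le[of "{0..<r}"] by simp
  have fY: "finite Y" unfolding Y_def using finite_lists_length_eq[of "{0..<r}"] by simp
  have d: "(\<lambda>(b, u). (b, u, 0::nat)) ` ({0..r} \<times> T) \<inter> (\<lambda>u. (0::nat, u, 0::nat)) ` Y = {}"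
    using s1 unfolding T_def Y_def by auto
  have i1: "inj_on (\<lambda>(b, u). (b::nat, u::nat list, 0::nat)) ({0..r} \<times> T)" by (auto simp: inj_on_def)
  have i2: "inj_on (\<lambda>u. (0::nat, u::nat list, 0::nat)) Y" by (auto simp: inj_on_def)
  have "card (vtO s ` DO r s) = card ({0..r} \<times> T) + card Y"
    unfolding e using card_Un_disjoint[OF _ _ d] fT fY card_image[OF i1] card_image[OF i2] by simp
  also have "\<dots> = Suc r * (\<Sum>i\<le>s - 1. r ^ i) + r ^ s"
    unfolding T_def Y_def by (simp add: card_cartesian_product card_lists_le card_lists_length_eq)
  finally show ?thesis .
qed

end


lemma final_from_ginv:
  fixes D :: "nat set"
  assumes g: "ginv r (t - 1) PH VH D iv vt h" and gi: "girth_gt t D iv vt" and t1: "1 \<le> t" and VH: "0 < VH"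
  shows "\<exists>n k (C::(nat\<Rightarrow>bit) set). seq_LRC n k r t C \<and>
     real k / real n = ((real r - 1) * real VH + real PH) / ((real r + 1) * real VH + real PH)"
proof -
  interpret gcode D iv vt h r t using g gi t1 unfolding ginv_def by unfold_locales auto
  obtain C :: "(nat \<Rightarrow> bit) set" where C: "seq_LRC (card (edge iv ` D)) (card (edge iv ` I)) r t C" using exists_code by blast
  define n where "n = card (edge iv ` D)"
  define k where "k = card (edge iv ` I)"
  define V where "V = card (vt ` D)"
  define P where "P = card {d\<in>D. iv d = d}"
  have c1: "k + V = n" using card_edgesI unfolding k_def V_def n_def .
  have c2: "2 * n = card D + P" using card_edges2 unfolding n_def P_def .
  have c3: "card D = Suc r * V" using card_D unfolding V_def .
  have c4: "P * VH = PH * V" using g unfolding ginv_def P_def V_def by auto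
  have "D \<noteq> {}" using g unfolding ginv_def by auto
  then have Vp: "0 < V" unfolding V_def using finD by (simp add: card_gt_0_iff)
  have E1: "2 * real k = (real r - 1) * real V + real P"
  proof -
    have "2 * k + 2 * V = (Suc r) * V + P" using c1 c2 c3 by simp
    then have "2 * real k + 2 * real V = (real r + 1) * real V + real P" by (metis of_nat_add of_nat_mult of_nat_numeral of_nat_Suc add.commute)
    then show ?thesis by (simp add: algebra_simps)
  qed
  have E2: "2 * real n = (real r + 1) * real V + real P"
  proof -
    have "2 * n = (Suc r) * V + P" using c2 c3 by simp
    then have "2 * real n = real (Suc r * V + P)" by (metis of_nat_mult of_nat_numeral)
    then show ?thesis by (simp add: algebra_simps)
  qed
  have E3: "real P * real VH = real PH * real V" using c4 by (metis of_nat_mult)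
  have num: "real VH * (2 * real k) = real V * ((real r - 1) * real VH + real PH)"
  proof -
    have "real VH * (2 * real k) = (real r - 1) * real V * real VH + real P * real VH" by (subst E1) (simp add: algebra_simps)
    also have "\<dots> = real V * ((real r - 1) * real VH + real PH)" using E3 by (simp add: algebra_simps)
    finally show ?thesis .
  qed
  have den: "real VH * (2 * real n) = real V * ((real r + 1) * real VH + real PH)"
  proof -
    have "real VH * (2 * real n) = (real r + 1) * real V * real VH + real P * real VH" by (subst E2) (simp add: algebra_simps)
    also have "\<dots> = real V * ((real r + 1) * real VH + real PH)" using E3 by (simp add: algebra_simps)
    finally show ?thesis .
  qed
  have "real k / real n = (real VH * (2 * real k)) / (real VH * (2 * real n))" using VH by simp
  also have "\<dots> = ((real r - 1) * real VH + real PH) / ((real r + 1) * real VH + real PH)"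
    unfolding num den using Vp by simp
  finally show ?thesis using C unfolding n_def k_def by blast
qed


lemma gp: "(real r - 1) * (\<Sum>i\<le>n. real r ^ i) = real r ^ Suc n - 1"
  using sum_gp_basic[of "real r" n] by (simp add: algebra_simps)

lemma cancel2: "2 * a / (2 * b) = (a::real) / b" by simp

theorem mainTheorem11:
  fixes r t :: nat
  assumes "r \<ge> 3" and "t \<ge> 2"
  defines "s \<equiv> (t - 1) div 2"
  shows "\<exists>n k (C :: (nat \<Rightarrow> bit) set). seq_LRC n k r t C \<and>
           (if even t
            then real k / real n = real r ^ (s + 1) / (real r ^ (s + 1) + 2 * (\<Sum>i = 0..s. real r ^ i))
            else real k / real n = real r ^ (s + 1) / (real r ^ (s + 1) + 2 * (\<Sum>i = 1..s. real r ^ i) + 1))"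
proof (cases "even t")
  case True
  have ts: "t - 1 = Suc (2 * s)" using True assms(2) unfolding s_def by (elim evenE) auto
  define PH where "PH = card {d\<in>DE r s. ivE s d = d}"
  define VH where "VH = card (vtE ` DE r s)"
  have PH: "PH = 2" unfolding PH_def by (rule card_semiE)
  have VHe: "VH = 2 * (\<Sum>i\<le>s. r ^ i)" unfolding VH_def by (rule card_vertE)
  have g0: "ginv r (t - 1) PH VH (DE r s) (ivE s) vtE (hE s)" unfolding ts PH_def VH_def by (rule ginvE)
  obtain D :: "nat set" and iv vt h where gD: "ginv r (t - 1) PH VH D iv vt h" "girth_gt (Suc (t - 1)) D iv vt"
    using cover_iter[OF g0, of "t - 1"] by blast
  have gt: "girth_gt t D iv vt" using gD(2) assms(2) by (simp add: Suc_diff_1)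
  have VH0: "0 < VH" unfolding VHe by (simp add: sum_pos2[of "{..s}" 0])
  obtain n k and C :: "(nat \<Rightarrow> bit) set" where C: "seq_LRC n k r t C"
    "real k / real n = ((real r - 1) * real VH + real PH) / ((real r + 1) * real VH + real PH)"
    using final_from_ginv[OF gD(1) gt _ VH0] assms(2) by fastforce
  define S where "S = (\<Sum>i\<le>s. real r ^ i)"
  have rV: "real VH = 2 * S" unfolding VHe S_def by simp
  have gS: "(real r - 1) * S = real r ^ Suc s - 1" unfolding S_def by (rule gp)
  have S0: "(\<Sum>i = 0..s. real r ^ i) = S" unfolding S_def by (simp add: atLeast0AtMost)
  have num: "(real r - 1) * real VH + real PH = 2 * real r ^ (s + 1)"
    using gS unfolding rV PH by (simp add: algebra_simps)
  have den: "(real r + 1) * real VH + real PH = 2 * (real r ^ (s + 1) + 2 * S)"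
    using gS unfolding rV PH by (simp add: algebra_simps)
  have "real k / real n = real r ^ (s + 1) / (real r ^ (s + 1) + 2 * (\<Sum>i = 0..s. real r ^ i))"
    using C(2) unfolding num den S0 cancel2 by simp
  then show ?thesis using C(1) True by auto
next
  case False
  have ts: "t - 1 = 2 * s" using False assms(2) unfolding s_def by (elim oddE) auto
  have s1: "1 \<le> s" using False assms(2) unfolding s_def by (elim oddE) auto
  define PH where "PH = card {d\<in>DO r s. ivO d = d}"
  define VH where "VH = card (vtO s ` DO r s)"
  have PH: "PH = Suc r" unfolding PH_def by (rule card_semiO[OF s1])
  have VHe: "VH = Suc r * (\<Sum>i\<le>s - 1. r ^ i) + r ^ s" unfolding VH_def by (rule card_vertO[OF s1])
  have g0: "ginv r (t - 1) PH VH (DO r s) ivO (vtO s) (hO s)" unfolding ts PH_def VH_def by (rule ginvO[OF s1])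
  obtain D :: "nat set" and iv vt h where gD: "ginv r (t - 1) PH VH D iv vt h" "girth_gt (Suc (t - 1)) D iv vt"
    using cover_iter[OF g0, of "t - 1"] by blast
  have gt: "girth_gt t D iv vt" using gD(2) assms(2) by (simp add: Suc_diff_1)
  have VH0: "0 < VH" unfolding VHe using assms(1) by simp
  obtain n k and C :: "(nat \<Rightarrow> bit) set" where C: "seq_LRC n k r t C"
    "real k / real n = ((real r - 1) * real VH + real PH) / ((real r + 1) * real VH + real PH)"
    using final_from_ginv[OF gD(1) gt _ VH0] assms(2) by fastforce
  define S' where "S' = (\<Sum>i\<le>s - 1. real r ^ i)"
  define T where "T = (\<Sum>i = 1..s. real r ^ i)"
  have rV: "real VH = (real r + 1) * S' + real r ^ s" unfolding VHe S'_def by (simp add: algebra_simps)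
  have gS: "(real r - 1) * S' = real r ^ s - 1" unfolding S'_def using gp[of r "s - 1"] s1 by simp
  have sT: "S' + real r ^ s = 1 + T"
  proof -
    have "S' + real r ^ s = (\<Sum>i\<le>s. real r ^ i)" unfolding S'_def using s1
      by (metis Suc_diff_1 less_le_trans sum.atMost_Suc zero_less_one)
    also have "\<dots> = 1 + T" unfolding T_def using sum.atLeast_Suc_atMost[of 0 s "\<lambda>i. real r ^ i"]
      by (simp add: atLeast0AtMost)
    finally show ?thesis .
  qed
  have rs: "real r ^ (s + 1) = real r * real r ^ s" by simp
  have num: "(real r - 1) * real VH + real PH = 2 * real r ^ (s + 1)"
  proof -
    have "(real r - 1) * real VH + real PH = (real r + 1) * ((real r - 1) * S') + (real r - 1) * real r ^ s + (real r + 1)"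
      unfolding rV PH by (simp add: algebra_simps)
    also have "\<dots> = 2 * real r ^ (s + 1)" unfolding gS rs by (simp add: algebra_simps)
    finally show ?thesis .
  qed
  have den: "(real r + 1) * real VH + real PH = 2 * (real r ^ (s + 1) + 2 * T + 1)"
  proof -
    have "(real r + 1) * real VH + real PH = (real r + 1) * ((real r - 1) * S' + 2 * (S' + real r ^ s) - real r ^ s + 1)"
      unfolding rV PH by (simp add: algebra_simps)
    also have "\<dots> = (real r + 1) * (2 + 2 * T)" unfolding gS sT by (simp add: algebra_simps)
    also have "\<dots> = 2 * (real r ^ (s + 1) + 2 * T + 1)"
    proof -
      have "real r * T = T - real r + real r ^ (s + 1)"
      proof -
        have "real r * (1 + T) = real r * (S' + real r ^ s)" using sT by simp
        also have "\<dots> = (real r - 1) * S' + S' + real r ^ (s + 1)" by (simp add: algebra_simps)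
        also have "\<dots> = T + real r ^ (s + 1)" using gS sT by (simp add: algebra_simps)
        finally show ?thesis by (simp add: algebra_simps)
      qed
      then show ?thesis by (simp add: algebra_simps)
    qed
    finally show ?thesis .
  qed
  have "real k / real n = real r ^ (s + 1) / (real r ^ (s + 1) + 2 * (\<Sum>i = 1..s. real r ^ i) + 1)"
    using C(2) unfolding num den T_def cancel2 by simp
  then show ?thesis using C(1) False by auto
qed


end
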